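(* Let $D\in\mathbb{R}^{d\times d}$ be diagonal, $\boldsymbol{\tau},\boldsymbol{\zeta}\in[0,\infty)^d$, and define the hyperrectangles $\Theta(\boldsymbol{\tau})=\{\boldsymbol{\theta}\in\mathbb{R}^d:|\theta_i|\le\tau_i\ \forall i\}$ and $\Delta(\boldsymbol{\zeta})=\{\boldsymbol{\delta}\in\mathbb{R}^d:|\delta_i|\le\zeta_i\ \forall i\}$. For $\boldsymbol{\theta}\in\Theta(\boldsymbol{\tau}),\boldsymbol{\delta}\in\Delta(\boldsymbol{\zeta})$ one observes independent $\mathbf{x}\sim\mathcal{N}(D\boldsymbol{\theta}+\boldsymbol{\delta},I_d)$ and $\mathbf{y}\sim\mathcal{N}(\boldsymbol{\theta},I_d)$. Let $$R_L(\Theta(\boldsymbol{\tau}),\Delta(\boldsymbol{\zeta}),D)=\inf_{A,B\in\mathbb{R}^{d\times d}}\sup_{\boldsymbol{\theta}\in\Theta(\boldsymbol{\tau}),\boldsymbol{\delta}\in\Delta(\boldsymbol{\zeta})}\mathbb{E}\|A\mathbf{x}+B\mathbf{y}-\boldsymbol{\theta}\|_2^2,$$ and $R_N(\Theta(\boldsymbol{\tau}),\Delta(\boldsymbol{\zeta}),D)$ the same with the infimum over all measurable estimators $\hat{\boldsymbol{\theta}}(\mathbf{x},\mathbf{y})\in\mathbb{R}^d$. For scalars $\tau,\zeta\ge0$, $s\in\mathbb{R}$, let $R_L(\tau,\zeta,s)$ and $R_N(\tau,\zeta,s)$ be the analogous one-dimensional quantities for estimating $\theta\in\mathbb{R}$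 with $|\theta|\le\tau$, $|\delta|\le\zeta$ from independent $u\sim\mathcal{N}(s\theta+\delta,1)$, $v\sim\mathcal{N}(\theta,1)$ (linear estimators $au+bv$, resp. all measurable estimators). Then (a) $R_L(\Theta(\boldsymbol{\tau}),\Delta(\boldsymbol{\zeta}),D)=\sum_{i=1}^dR_L(\tau_i,\zeta_i,D_{ii})$, and if $\mathbf{x},\mathbf{y}\mapsto A\mathbf{x}+B\mathbf{y}$ is a minimax linear estimator for this problem then $A$ and $B$ must be diagonal; (b) $R_N(\Theta(\boldsymbol{\tau}),\Delta(\boldsymbol{\zeta}),D)=\sum_{i=1}^dR_N(\tau_i,\zeta_i,D_{ii})$. *)

theory Defs
  imports "HOL-Probability.Probability"
begin

definition gauss1 :: "real \<Rightarrow> real measure" where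
  "gauss1 mu = density lborel (normal_density mu 1)"

definition gaussv :: "real ^ 'd \<Rightarrow> (real ^ 'd) measure" where
  "gaussv mu = density lborel (\<lambda>x. \<Prod>i\<in>UNIV. normal_density (mu $ i) 1 (x $ i))"

definition diag_mat :: "real ^ 'd ^ 'd \<Rightarrow> bool" where
  "diag_mat M \<longleftrightarrow> (\<forall>i j. i \<noteq> j \<longrightarrow> M $ i $ j = 0)"

definition hrect :: "real ^ 'd \<Rightarrow> (real ^ 'd) set" where
  "hrect t = {v. \<forall>i. \<bar>v $ i\<bar> \<le> t $ i}"

section \<open>Risks (as nonnegative extended reals, so every estimator has a well-defined risk)\<close>

definition riskv :: "real ^ 'd ^ 'd \<Rightarrow> real ^ 'd \<Rightarrow> real ^ 'd
    \<Rightarrow> (real ^ 'd \<Rightarrow> real ^ 'd \<Rightarrow> real ^ 'd) \<Rightarrow> ennreal" where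
  "riskv D th de est =
     (\<integral>\<^sup>+ z. ennreal ((norm (est (fst z) (snd z) - th))\<^sup>2)
        \<partial>(gaussv (D *v th + de) \<Otimes>\<^sub>M gaussv th))"

definition worst_riskv :: "real ^ 'd \<Rightarrow> real ^ 'd \<Rightarrow> real ^ 'd ^ 'd
    \<Rightarrow> (real ^ 'd \<Rightarrow> real ^ 'd \<Rightarrow> real ^ 'd) \<Rightarrow> ennreal" where
  "worst_riskv tau zeta D est = (SUP th\<in>hrect tau. SUP de\<in>hrect zeta. riskv D th de est)"

definition RL_vec :: "real ^ 'd \<Rightarrow> real ^ 'd \<Rightarrow> real ^ 'd ^ 'd \<Rightarrow> ennreal" where
  "RL_vec tau zeta D =
     (INF A\<in>UNIV. INF B\<in>UNIV. worst_riskv tau zeta D (\<lambda>x y. A *v x + B *v y))"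

definition RN_vec :: "real ^ 'd \<Rightarrow> real ^ 'd \<Rightarrow> real ^ 'd ^ 'd \<Rightarrow> ennreal" where
  "RN_vec tau zeta D =
     (INF est\<in>{est :: real ^ 'd \<Rightarrow> real ^ 'd \<Rightarrow> real ^ 'd.
                 (\<lambda>z. est (fst z) (snd z)) \<in> borel_measurable (borel \<Otimes>\<^sub>M borel)}.
        worst_riskv tau zeta D est)"

definition minimax_linear :: "real ^ 'd \<Rightarrow> real ^ 'd \<Rightarrow> real ^ 'd ^ 'd
    \<Rightarrow> real ^ 'd ^ 'd \<Rightarrow> real ^ 'd ^ 'd \<Rightarrow> bool" where
  "minimax_linear tau zeta D A B \<longleftrightarrow>
     worst_riskv tau zeta D (\<lambda>x y. A *v x + B *v y) = RL_vec tau zeta D"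

definition risk1 :: "real \<Rightarrow> real \<Rightarrow> real \<Rightarrow> (real \<Rightarrow> real \<Rightarrow> real) \<Rightarrow> ennreal" where
  "risk1 s th de est =
     (\<integral>\<^sup>+ z. ennreal ((est (fst z) (snd z) - th)\<^sup>2) \<partial>(gauss1 (s * th + de) \<Otimes>\<^sub>M gauss1 th))"

definition worst_risk1 :: "real \<Rightarrow> real \<Rightarrow> real \<Rightarrow> (real \<Rightarrow> real \<Rightarrow> real) \<Rightarrow> ennreal" where
  "worst_risk1 tau zeta s est = (SUP th\<in>{-tau..tau}. SUP de\<in>{-zeta..zeta}. risk1 s th de est)"

definition RL1 :: "real \<Rightarrow> real \<Rightarrow> real \<Rightarrow> ennreal" where
  "RL1 tau zeta s = (INF a\<in>UNIV. INF b\<in>UNIV. worst_risk1 tau zeta s (\<lambda>u v. a * u + b * v))"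

definition RN1 :: "real \<Rightarrow> real \<Rightarrow> real \<Rightarrow> ennreal" where
  "RN1 tau zeta s =
     (INF est\<in>{est :: real \<Rightarrow> real \<Rightarrow> real.
                 (\<lambda>z. est (fst z) (snd z)) \<in> borel_measurable (borel \<Otimes>\<^sub>M borel)}.
        worst_risk1 tau zeta s est)"

end

theory Submission
  imports Defs "HOL-Probability.Probability"
begin

lemma sets_gauss1[simp, measurable_cong]: "sets (gauss1 m) = sets borel"
  by (simp add: gauss1_def)

lemma space_gauss1[simp]: "space (gauss1 m) = UNIV"
  by (simp add: gauss1_def)

lemma prob_space_gauss1[simp, intro]: "prob_space (gauss1 m)"
  unfolding gauss1_def by (rule prob_space_normal_density) simp

lemma emeasure_gauss1_UNIV[simp]: "emeasure (gauss1 m) UNIV = 1"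
  using prob_space.emeasure_space_1[OF prob_space_gauss1[of m]] by simp

lemma sets_gaussv[simp, measurable_cong]: "sets (gaussv m) = sets borel"
  by (simp add: gaussv_def)

lemma space_gaussv[simp]: "space (gaussv m) = UNIV"
  by (simp add: gaussv_def)

lemma nn_integral_gauss1_quad:
  "(\<integral>\<^sup>+x. ennreal ((c * x + t)^2) \<partial>gauss1 m) = ennreal (c^2 + (c*m + t)^2)"
proof -
  let ?n = "normal_density m 1"
  have eq: "\<And>x. ?n x * (c*x+t)^2 = c^2 * (?n x * (x - m)^(2*1)) + 2*c*(c*m+t) * (?n x * (x-m)^(2*0+1)) + (c*m+t)^2 * ?n x"
    by (simp add: power2_eq_square algebra_simps)
  have int: "integrable lborel (\<lambda>x. ?n x * (c*x+t)^2)"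
    unfolding eq by (intro Bochner_Integration.integrable_add integrable_mult_right integrable_normal_moment; simp)
  have "(\<integral>\<^sup>+x. ennreal ((c * x + t)^2) \<partial>gauss1 m) = (\<integral>\<^sup>+x. ennreal (?n x * (c*x+t)^2) \<partial>lborel)"
    unfolding gauss1_def by (subst nn_integral_density) (auto simp: ennreal_mult)
  also have "\<dots> = ennreal (\<integral>x. ?n x * (c*x+t)^2 \<partial>lborel)"
    by (rule nn_integral_eq_integral[OF int]) auto
  also have "(\<integral>x. ?n x * (c*x+t)^2 \<partial>lborel) = c^2 + (c*m+t)^2"
  proof -
    have i1: "(\<integral>x. ?n x * (x - m)^(2*1) \<partial>lborel) = 1"
      using integral_normal_moment_even[of 1 m 1] by simp
    have i2: "(\<integral>x. ?n x * (x - m)^(2*0+1) \<partial>lborel) = 0"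
      using integral_normal_moment_odd[of 1 m 0] by simp
    have j1: "integrable lborel (\<lambda>x. ?n x * (x - m)^(2*1))" by (rule integrable_normal_moment) simp
    have j2: "integrable lborel (\<lambda>x. ?n x * (x - m)^(2*0+1))" by (rule integrable_normal_moment) simp
    show ?thesis
      unfolding eq
      apply (subst Bochner_Integration.integral_add)
        apply (intro Bochner_Integration.integrable_add integrable_mult_right j1 j2)
       apply (intro integrable_mult_right) apply simp
      apply (subst Bochner_Integration.integral_add)
        apply (intro integrable_mult_right j1 j2)
       apply (intro integrable_mult_right j1 j2)
      using i1 i2 apply simp
      done
  qed
  finally show ?thesis .
qed

lemma nn_integral_gauss_pair_quad:
  "(\<integral>\<^sup>+z. ennreal ((a * fst z + b * snd z + t)^2) \<partial>(gauss1 m \<Otimes>\<^sub>M gauss1 n)) = ennreal (a^2 + b^2 + (a*m + b*n + t)^2)"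
proof -
  interpret N: prob_space "gauss1 n" by simp
  interpret M: prob_space "gauss1 m" by simp
  have "(\<integral>\<^sup>+z. ennreal ((a * fst z + b * snd z + t)^2) \<partial>(gauss1 m \<Otimes>\<^sub>M gauss1 n))
     = (\<integral>\<^sup>+x. \<integral>\<^sup>+y. ennreal ((a * x + b * y + t)^2) \<partial>gauss1 n \<partial>gauss1 m)"
    by (subst N.nn_integral_fst[symmetric]) auto
  also have "\<dots> = (\<integral>\<^sup>+x. ennreal (b^2) + ennreal ((a*x + (b*n+t))^2) \<partial>gauss1 m)"
  proof (rule nn_integral_cong)
    fix x
    have "(\<integral>\<^sup>+y. ennreal ((a * x + b * y + t)^2) \<partial>gauss1 n) = (\<integral>\<^sup>+y. ennreal ((b * y + (a*x+t))^2) \<partial>gauss1 n)"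
      by (simp add: algebra_simps)
    also have "\<dots> = ennreal (b^2 + (b*n + (a*x+t))^2)" by (rule nn_integral_gauss1_quad)
    finally show "(\<integral>\<^sup>+y. ennreal ((a * x + b * y + t)^2) \<partial>gauss1 n) = ennreal (b^2) + ennreal ((a*x + (b*n+t))^2)"
      by (simp add: ennreal_plus[symmetric] algebra_simps del: ennreal_plus)
  qed
  also have "\<dots> = ennreal (b^2) + ennreal (a^2 + (a*m + (b*n+t))^2)"
    by (subst nn_integral_add) (auto simp: nn_integral_gauss1_quad M.emeasure_space_1)
  also have "\<dots> = ennreal (a^2 + b^2 + (a*m + b*n + t)^2)"
    by (simp add: ennreal_plus[symmetric] algebra_simps del: ennreal_plus)
  finally show ?thesis .
qed

lemma measure_eq_boxes:
  fixes M N :: "'a::euclidean_space measure"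
  assumes sets: "sets M = sets borel" "sets N = sets borel"
    and fin: "finite_measure M"
    and eq: "\<And>l u. emeasure M (box l u) = emeasure N (box l u)"
  shows "M = N"
proof (rule measure_eqI_generator_eq[where E="range (\<lambda>(a, b). box a b)" and \<Omega>=UNIV and A="\<lambda>n::nat. box (- (real n *\<^sub>R One)) (real n *\<^sub>R One)"])
  show "Int_stable (range (\<lambda>(a, b). box a b::'a set))" by (auto simp: Int_stable_def box_Int_box)
  show "range (\<lambda>(a, b). box a b) \<subseteq> Pow (UNIV::'a set)" by auto
  show "sets M = sigma_sets UNIV (range (\<lambda>(a, b). box a b))" using sets by (simp add: borel_eq_box)
  show "sets N = sigma_sets UNIV (range (\<lambda>(a, b). box a b))" using sets by (simp add: borel_eq_box)
  show "range (\<lambda>n::nat. box (- (real n *\<^sub>R One)) (real n *\<^sub>R One)) \<subseteq> range (\<lambda>(a, b). box a b::'a set)" by auto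
  show "(\<Union>n::nat. box (- (real n *\<^sub>R One)) (real n *\<^sub>R One)) = (UNIV::'a set)" by (rule UN_box_eq_UNIV)
  show "emeasure M (box (- (real n *\<^sub>R One)) (real n *\<^sub>R One)) \<noteq> \<infinity>" for n
    using finite_measure.emeasure_finite[OF fin] by (simp add: top_unique)
  show "X \<in> range (\<lambda>(a, b). box a b) \<Longrightarrow> emeasure M X = emeasure N X" for X using eq by auto
qed

lemma Basis_vec_real: "(Basis :: (real^'d) set) = range (\<lambda>i. axis i 1)"
  by (auto simp: Basis_vec_def)

lemma emeasure_gaussv_box:
  fixes m l u :: "real^'d"
  shows "emeasure (gaussv m) (box l u) = (\<Prod>i\<in>UNIV. emeasure (gauss1 (m$i)) {l$i<..<u$i})"
proof -
  define f where "f b t = ennreal (normal_density (m \<bullet> b) 1 t) * indicator {l \<bullet> b<..<u \<bullet> b} t" for b :: "real^'d" and t :: real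
  have "emeasure (gaussv m) (box l u) = (\<integral>\<^sup>+x. ennreal (\<Prod>i\<in>UNIV. normal_density (m$i) 1 (x$i)) * indicator (box l u) x \<partial>lborel)"
    unfolding gaussv_def by (subst emeasure_density) auto
  also have "\<dots> = (\<integral>\<^sup>+x. (\<Prod>b\<in>Basis. f b (x \<bullet> b)) \<partial>lborel)"
  proof (rule nn_integral_cong)
    fix x :: "real^'d"
    have "(\<Prod>b\<in>Basis. f b (x \<bullet> b)) = (\<Prod>i\<in>UNIV. f (axis i 1) (x \<bullet> axis i 1))"
      unfolding Basis_vec_real by (subst prod.reindex) (auto simp: inj_on_def axis_eq_axis)
    also have "\<dots> = (\<Prod>i\<in>UNIV. ennreal (normal_density (m$i) 1 (x$i)) * indicator {l$i<..<u$i} (x$i))"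
      by (simp add: f_def inner_axis)
    also have "\<dots> = ennreal (\<Prod>i\<in>UNIV. normal_density (m$i) 1 (x$i)) * indicator (box l u) x"
    proof (cases "x \<in> box l u")
      case True
      then show ?thesis by (simp add: mem_box_cart prod_ennreal)
    next
      case False
      then obtain i where "\<not> (l$i < x$i \<and> x$i < u$i)" by (auto simp: mem_box_cart)
      then have "indicator {l$i<..<u$i} (x$i) = (0::ennreal)" by auto
      then have "(\<Prod>i\<in>UNIV. ennreal (normal_density (m$i) 1 (x$i)) * indicator {l$i<..<u$i} (x$i)) = 0"
        by (intro prod_zero) (auto intro!: bexI[of _ i])
      with False show ?thesis by simp
    qed
    finally show "ennreal (\<Prod>i\<in>UNIV. normal_density (m$i) 1 (x$i)) * indicator (box l u) x = (\<Prod>b\<in>Basis. f b (x \<bullet> b))" by simp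
  qed
  also have "\<dots> = (\<Prod>b\<in>Basis. (\<integral>\<^sup>+t. f b t \<partial>lborel))"
    by (rule nn_integral_lborel_prod) (auto simp: f_def)
  also have "\<dots> = (\<Prod>i\<in>UNIV. (\<integral>\<^sup>+t. f (axis i 1) t \<partial>lborel))"
    unfolding Basis_vec_real by (subst prod.reindex) (auto simp: inj_on_def axis_eq_axis)
  also have "\<dots> = (\<Prod>i\<in>UNIV. emeasure (gauss1 (m$i)) {l$i<..<u$i})"
    by (intro prod.cong refl) (simp add: f_def inner_axis gauss1_def emeasure_density)
  finally show ?thesis .
qed

lemma borel_measurable_vec_lambda:
  fixes f :: "'x \<Rightarrow> 'd::finite \<Rightarrow> real"
  assumes "\<And>i. (\<lambda>x. f x i) \<in> borel_measurable M"
  shows "(\<lambda>x. vec_lambda (f x)) \<in> borel_measurable M"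
  by (subst borel_measurable_euclidean_space) (auto simp: Basis_vec_real inner_axis assms)

lemma gaussv_eq_distr:
  fixes m :: "real^'d"
  shows "gaussv m = distr (PiM UNIV (\<lambda>j. gauss1 (m$j))) borel vec_lambda"
proof -
  let ?P = "PiM UNIV (\<lambda>j. gauss1 (m$j))"
  interpret P: prob_space ?P by (intro prob_space_PiM) simp
  interpret product_sigma_finite "\<lambda>j. gauss1 (m$j)"
    by (simp add: product_sigma_finite_def prob_space_imp_sigma_finite)
  have meas: "vec_lambda \<in> measurable ?P borel"
    by (rule borel_measurable_vec_lambda) simp
  show ?thesis
  proof (rule measure_eq_boxes[symmetric])
    show "sets (distr ?P borel vec_lambda) = sets borel" by simp
    show "sets (gaussv m) = sets borel" by simp
    show "finite_measure (distr ?P borel vec_lambda)"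
      using prob_space.prob_space_distr[OF P.prob_space_axioms meas] by (simp add: prob_space_def)
    fix l u :: "real^'d"
    have "vec_lambda -` box l u \<inter> space ?P = PiE UNIV (\<lambda>i. {l$i<..<u$i})"
      by (auto simp: space_PiM mem_box_cart PiE_iff)
    then show "emeasure (distr ?P borel vec_lambda) (box l u) = emeasure (gaussv m) (box l u)"
      by (simp add: emeasure_distr meas emeasure_PiM emeasure_gaussv_box)
  qed
qed

lemma prob_space_gaussv[simp, intro]: "prob_space (gaussv m)"
  unfolding gaussv_eq_distr
  by (intro prob_space.prob_space_distr prob_space_PiM borel_measurable_vec_lambda) auto

definition QQ :: "real^'d \<Rightarrow> real^'d \<Rightarrow> ('d \<Rightarrow> real \<times> real) measure" where
  "QQ a b = PiM UNIV (\<lambda>j. gauss1 (a$j) \<Otimes>\<^sub>M gauss1 (b$j))"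

definition XY :: "('d::finite \<Rightarrow> real \<times> real) \<Rightarrow> (real^'d) \<times> (real^'d)" where
  "XY \<omega> = (vec_lambda (\<lambda>j. fst (\<omega> j)), vec_lambda (\<lambda>j. snd (\<omega> j)))"

lemma prob_space_pair_gauss[simp,intro]: "prob_space (gauss1 a \<Otimes>\<^sub>M gauss1 b)"
  by (intro prob_space_pair) auto

lemma prob_space_QQ[simp,intro]: "prob_space (QQ a b)"
  unfolding QQ_def by (intro prob_space_PiM) auto

lemma sets_QQ[measurable_cong]: "sets (QQ a b) = sets (PiM UNIV (\<lambda>j. borel \<Otimes>\<^sub>M borel))"
  unfolding QQ_def by (intro sets_PiM_cong refl sets_pair_measure_cong) auto

lemma XY_measurable[measurable]: "XY \<in> measurable (QQ a b) (borel \<Otimes>\<^sub>M borel)"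
  unfolding XY_def by (intro measurable_Pair borel_measurable_vec_lambda) (auto simp: QQ_def)

lemma XY_measurable_borel: "XY \<in> borel_measurable (QQ a b)"
  using XY_measurable by (simp add: borel_prod)

lemma gaussv_pair_eq:
  fixes a b :: "real^'d"
  shows "gaussv a \<Otimes>\<^sub>M gaussv b = distr (QQ a b) (borel \<Otimes>\<^sub>M borel) XY"
proof -
  interpret Q: prob_space "QQ a b" by simp
  interpret product_sigma_finite "\<lambda>j. gauss1 (a$j) \<Otimes>\<^sub>M gauss1 (b$j)"
    by (simp add: product_sigma_finite_def prob_space_imp_sigma_finite)
  interpret G: pair_prob_space "gaussv a" "gaussv b" by (simp add: pair_prob_space_def pair_sigma_finite_def prob_space_imp_sigma_finite)
  have eq: "distr (QQ a b) (borel \<Otimes>\<^sub>M borel) XY = distr (QQ a b) borel XY"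
    by (simp add: borel_prod)
  have "gaussv a \<Otimes>\<^sub>M gaussv b = distr (QQ a b) borel XY"
  proof (rule measure_eq_boxes[symmetric])
    show "sets (distr (QQ a b) borel XY) = sets borel" by simp
    show "sets (gaussv a \<Otimes>\<^sub>M gaussv b) = sets borel"
      by (simp add: borel_prod[symmetric] cong: sets_pair_measure_cong)
    show "finite_measure (distr (QQ a b) borel XY)"
      using prob_space.prob_space_distr[OF Q.prob_space_axioms XY_measurable_borel] by (simp add: prob_space_def)
    fix l u :: "(real^'d) \<times> (real^'d)"
    have "XY -` box l u \<inter> space (QQ a b) = PiE UNIV (\<lambda>i. {fst l$i<..<fst u$i} \<times> {snd l$i<..<snd u$i})"
      by (auto simp: QQ_def XY_def space_PiM mem_box_cart PiE_iff box_prod space_pair_measure mem_Times_iff)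
    then have "emeasure (distr (QQ a b) borel XY) (box l u) = (\<Prod>i\<in>UNIV. emeasure (gauss1 (a$i)) {fst l$i<..<fst u$i} * emeasure (gauss1 (b$i)) {snd l$i<..<snd u$i})"
      by (simp add: emeasure_distr XY_measurable_borel, simp add: QQ_def emeasure_PiM prob_space_imp_sigma_finite sigma_finite_measure.emeasure_pair_measure_Times)
    also have "\<dots> = emeasure (gaussv a \<Otimes>\<^sub>M gaussv b) (box l u)"
      by (simp add: box_prod sigma_finite_measure.emeasure_pair_measure_Times[OF prob_space_imp_sigma_finite[OF prob_space_gaussv]] emeasure_gaussv_box prod.distrib)
    finally show "emeasure (distr (QQ a b) borel XY) (box l u) = emeasure (gaussv a \<Otimes>\<^sub>M gaussv b) (box l u)" .
  qed
  then show ?thesis using eq by simp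
qed

lemma quad_PiM:
  fixes f :: "'i \<Rightarrow> 'a \<Rightarrow> real" and M :: "'i \<Rightarrow> 'a measure"
  assumes I: "finite I" and P: "\<And>j. prob_space (M j)"
    and meas: "\<And>j. j \<in> I \<Longrightarrow> f j \<in> borel_measurable (M j)"
    and H: "\<And>j t. j \<in> I \<Longrightarrow> (\<integral>\<^sup>+y. ennreal ((f j y + t)^2) \<partial>M j) = ennreal (v j + (m j + t)^2)"
    and v: "\<And>j. j \<in> I \<Longrightarrow> v j \<ge> 0"
  shows "(\<integral>\<^sup>+\<omega>. ennreal (((\<Sum>j\<in>I. f j (\<omega> j)) + c)^2) \<partial>PiM I M) = ennreal ((\<Sum>j\<in>I. v j) + ((\<Sum>j\<in>I. m j) + c)^2)"
  using I meas H v
proof (induction I arbitrary: c rule: finite_induct)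
  case empty
  then show ?case by (simp add: PiM_empty nn_integral_count_space_finite)
next
  case (insert i I)
  interpret product_sigma_finite M
    by (simp add: product_sigma_finite_def prob_space_imp_sigma_finite P)
  interpret PI: prob_space "PiM I M" by (intro prob_space_PiM P)
  have mS: "(\<lambda>\<omega>. \<Sum>j\<in>I. f j (\<omega> j)) \<in> borel_measurable (PiM I M)"
    using insert.prems(1) by (intro borel_measurable_sum measurable_compose[OF measurable_component_singleton]) auto
  have mS': "(\<lambda>\<omega>. \<Sum>j\<in>insert i I. f j (\<omega> j)) \<in> borel_measurable (PiM (insert i I) M)"
    using insert.prems(1) by (intro borel_measurable_sum measurable_compose[OF measurable_component_singleton]) auto
  have "(\<integral>\<^sup>+\<omega>. ennreal (((\<Sum>j\<in>insert i I. f j (\<omega> j)) + c)^2) \<partial>PiM (insert i I) M)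
     = (\<integral>\<^sup>+x. \<integral>\<^sup>+y. ennreal (((\<Sum>j\<in>insert i I. f j ((x(i:=y)) j)) + c)^2) \<partial>M i \<partial>PiM I M)"
    by (rule product_nn_integral_insert) (use insert mS' in auto)
  also have "\<dots> = (\<integral>\<^sup>+x. \<integral>\<^sup>+y. ennreal ((f i y + ((\<Sum>j\<in>I. f j (x j)) + c))^2) \<partial>M i \<partial>PiM I M)"
  proof (intro nn_integral_cong)
    fix x y
    have "(\<Sum>j\<in>insert i I. f j ((x(i:=y)) j)) = f i y + (\<Sum>j\<in>I. f j ((x(i:=y)) j))"
      using insert by simp
    also have "(\<Sum>j\<in>I. f j ((x(i:=y)) j)) = (\<Sum>j\<in>I. f j (x j))"
      using insert by (intro sum.cong) auto
    finally show "ennreal (((\<Sum>j\<in>insert i I. f j ((x(i:=y)) j)) + c)^2) = ennreal ((f i y + ((\<Sum>j\<in>I. f j (x j)) + c))^2)"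
      by (simp add: add.assoc)
  qed
  also have "\<dots> = (\<integral>\<^sup>+x. ennreal (v i) + ennreal (((\<Sum>j\<in>I. f j (x j)) + (m i + c))^2) \<partial>PiM I M)"
  proof (intro nn_integral_cong)
    fix x
    have "(\<integral>\<^sup>+y. ennreal ((f i y + ((\<Sum>j\<in>I. f j (x j)) + c))^2) \<partial>M i) = ennreal (v i + (m i + ((\<Sum>j\<in>I. f j (x j)) + c))^2)"
      using insert.prems(2)[of i] by simp
    also have "\<dots> = ennreal (v i) + ennreal (((\<Sum>j\<in>I. f j (x j)) + (m i + c))^2)"
      using insert.prems(3)[of i] by (simp add: ennreal_plus[symmetric] algebra_simps del: ennreal_plus)
    finally show "(\<integral>\<^sup>+y. ennreal ((f i y + ((\<Sum>j\<in>I. f j (x j)) + c))^2) \<partial>M i) = ennreal (v i) + ennreal (((\<Sum>j\<in>I. f j (x j)) + (m i + c))^2)" .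
  qed
  also have "\<dots> = ennreal (v i) + ennreal ((\<Sum>j\<in>I. v j) + ((\<Sum>j\<in>I. m j) + (m i + c))^2)"
    using insert mS by (subst nn_integral_add) (auto simp: PI.emeasure_space_1)
  also have "\<dots> = ennreal ((\<Sum>j\<in>insert i I. v j) + ((\<Sum>j\<in>insert i I. m j) + c)^2)"
    using insert by (simp add: ennreal_plus[symmetric] sum_nonneg algebra_simps del: ennreal_plus)
  finally show ?case .
qed

lemma diag_mult:
  assumes "diag_mat D"
  shows "(D *v th) $ i = D$i$i * th$i"
proof -
  have "(D *v th) $ i = (\<Sum>j\<in>UNIV. D$i$j * th$j)" by (simp add: matrix_vector_mult_def)
  also have "\<dots> = (\<Sum>j\<in>UNIV. if j = i then D$i$i * th$i else 0)"
    using assms by (intro sum.cong) (auto simp: diag_mat_def)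
  finally show ?thesis by simp
qed

lemma borel_measurable_vec_nth_fun:
  fixes f :: "'x \<Rightarrow> real^'d"
  assumes "f \<in> borel_measurable M"
  shows "(\<lambda>x. f x $ i) \<in> borel_measurable M"
proof -
  have "(\<lambda>x. f x \<bullet> axis i 1) \<in> borel_measurable M"
    using assms unfolding borel_measurable_euclidean_space[where f=f] by (auto simp: Basis_vec_real)
  then show ?thesis by (simp add: inner_axis)
qed

lemma borel_measurable_vec_nth[measurable]: "(\<lambda>x::real^'d. x $ i) \<in> borel_measurable borel"
  by (rule borel_measurable_vec_nth_fun) simp

lemma riskv_QQ:
  assumes [measurable]: "(\<lambda>z. est (fst z) (snd z)) \<in> borel_measurable (borel \<Otimes>\<^sub>M borel)"
  shows "riskv D th de est = (\<integral>\<^sup>+\<omega>. ennreal ((norm (est (fst (XY \<omega>)) (snd (XY \<omega>)) - th))\<^sup>2) \<partial>QQ (D *v th + de) th)"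
  unfolding riskv_def gaussv_pair_eq
  by (subst nn_integral_distr) (auto intro!: XY_measurable)

lemma norm_sq_vec: "(norm (v :: real^'d))\<^sup>2 = (\<Sum>i\<in>UNIV. (v$i)\<^sup>2)"
  unfolding power2_norm_eq_inner inner_vec_def by (simp add: power2_eq_square)

lemma riskv_coords:
  assumes [measurable]: "(\<lambda>z. est (fst z) (snd z)) \<in> borel_measurable (borel \<Otimes>\<^sub>M borel)"
  shows "riskv D th de est = (\<Sum>i\<in>UNIV. \<integral>\<^sup>+\<omega>. ennreal ((est (fst (XY \<omega>)) (snd (XY \<omega>)) $ i - th$i)\<^sup>2) \<partial>QQ (D *v th + de) th)"
proof -
  have m: "(\<lambda>\<omega>. est (fst (XY \<omega>)) (snd (XY \<omega>))) \<in> borel_measurable (QQ (D *v th + de) th)"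
    using measurable_compose[OF XY_measurable assms] by simp
  have "riskv D th de est = (\<integral>\<^sup>+\<omega>. (\<Sum>i\<in>UNIV. ennreal ((est (fst (XY \<omega>)) (snd (XY \<omega>)) $ i - th$i)\<^sup>2)) \<partial>QQ (D *v th + de) th)"
    unfolding riskv_QQ[OF assms] by (intro nn_integral_cong) (simp add: norm_sq_vec)
  show ?thesis
    unfolding \<open>riskv D th de est = _\<close>
    by (rule nn_integral_sum) (intro measurable_compose[OF _ measurable_ennreal] borel_measurable_power borel_measurable_diff borel_measurable_vec_nth_fun m; simp)
qed

lemma coord_split:
  fixes a b :: "real^'d"
  assumes F: "F \<in> borel_measurable (QQ a b)"
  shows "(\<integral>\<^sup>+\<omega>. F \<omega> \<partial>QQ a b) = (\<integral>\<^sup>+w. \<integral>\<^sup>+y. F (w(i:=y)) \<partial>(gauss1 (a$i) \<Otimes>\<^sub>M gauss1 (b$i)) \<partial>PiM (UNIV - {i}) (\<lambda>j. gauss1 (a$j) \<Otimes>\<^sub>M gauss1 (b$j)))"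
proof -
  interpret product_sigma_finite "\<lambda>j. gauss1 (a$j) \<Otimes>\<^sub>M gauss1 (b$j)"
    by (simp add: product_sigma_finite_def prob_space_imp_sigma_finite)
  have U: "(UNIV :: 'd set) = insert i (UNIV - {i})" by auto
  show ?thesis
    unfolding QQ_def
    apply (subst U)
    apply (rule product_nn_integral_insert)
    using F unfolding QQ_def by (auto simp flip: U)
qed

lemma XY_upd_fst: "fst (XY (w(i:=y))) $ i = fst y" by (simp add: XY_def)
lemma XY_upd_snd: "snd (XY (w(i:=y))) $ i = snd y" by (simp add: XY_def)

lemma riskv_sep:
  fixes D :: "real^'d^'d" and e :: "'d \<Rightarrow> real \<Rightarrow> real \<Rightarrow> real"
  assumes D: "diag_mat D"
    and me: "\<And>i. (\<lambda>z. e i (fst z) (snd z)) \<in> borel_measurable (borel \<Otimes>\<^sub>M borel)"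
  shows "riskv D th de (\<lambda>x y. \<chi> i. e i (x$i) (y$i)) = (\<Sum>i\<in>UNIV. risk1 (D$i$i) (th$i) (de$i) (e i))"
proof -
  have mest: "(\<lambda>z. (\<chi> i. e i (fst z $ i) (snd z $ i)) :: real^'d) \<in> borel_measurable (borel \<Otimes>\<^sub>M borel)"
  proof (rule borel_measurable_vec_lambda)
    fix i
    have "(\<lambda>z::(real^'d) \<times> (real^'d). (fst z $ i, snd z $ i)) \<in> measurable (borel \<Otimes>\<^sub>M borel) (borel \<Otimes>\<^sub>M borel)"
      by measurable
    from measurable_compose[OF this me[of i]] show "(\<lambda>z. e i (fst z $ i) (snd z $ i)) \<in> borel_measurable (borel \<Otimes>\<^sub>M borel)" by simp
  qed
  have "riskv D th de (\<lambda>x y. \<chi> i. e i (x$i) (y$i)) = (\<Sum>i\<in>UNIV. \<integral>\<^sup>+\<omega>. ennreal ((e i (fst (XY \<omega>) $ i) (snd (XY \<omega>) $ i) - th$i)\<^sup>2) \<partial>QQ (D *v th + de) th)"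
    using riskv_coords[OF mest] by simp
  also have "\<dots> = (\<Sum>i\<in>UNIV. risk1 (D$i$i) (th$i) (de$i) (e i))"
  proof (intro sum.cong refl)
    fix i
    let ?a = "D *v th + de"
    interpret PI: prob_space "PiM (UNIV - {i}) (\<lambda>j. gauss1 (?a$j) \<Otimes>\<^sub>M gauss1 (th$j))"
      by (intro prob_space_PiM) auto
    have mF: "(\<lambda>\<omega>. ennreal ((e i (fst (XY \<omega>) $ i) (snd (XY \<omega>) $ i) - th$i)\<^sup>2)) \<in> borel_measurable (QQ ?a th)"
    proof -
      have "(\<lambda>\<omega>. (fst (XY \<omega>) $ i, snd (XY \<omega>) $ i)) \<in> measurable (QQ ?a th) (borel \<Otimes>\<^sub>M borel)"
        by (intro measurable_Pair borel_measurable_vec_nth_fun measurable_compose[OF XY_measurable]) auto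
      from measurable_compose[OF this me[of i]] show ?thesis by simp
    qed
    have "(\<integral>\<^sup>+\<omega>. ennreal ((e i (fst (XY \<omega>) $ i) (snd (XY \<omega>) $ i) - th$i)\<^sup>2) \<partial>QQ ?a th)
       = (\<integral>\<^sup>+w. risk1 (D$i$i) (th$i) (de$i) (e i) \<partial>PiM (UNIV - {i}) (\<lambda>j. gauss1 (?a$j) \<Otimes>\<^sub>M gauss1 (th$j)))"
      unfolding coord_split[OF mF, of i] XY_upd_fst XY_upd_snd risk1_def
      by (simp add: diag_mult[OF D])
    also have "\<dots> = risk1 (D$i$i) (th$i) (de$i) (e i)"
      using PI.emeasure_space_1 by simp
    finally show "(\<integral>\<^sup>+\<omega>. ennreal ((e i (fst (XY \<omega>) $ i) (snd (XY \<omega>) $ i) - th$i)\<^sup>2) \<partial>QQ ?a th) = risk1 (D$i$i) (th$i) (de$i) (e i)" .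
  qed
  finally show ?thesis .
qed

lemma risk1_lin: "risk1 s th de (\<lambda>u v. a * u + b * v) = ennreal (a\<^sup>2 + b\<^sup>2 + (a*(s*th+de) + b*th - th)\<^sup>2)"
  unfolding risk1_def using nn_integral_gauss_pair_quad[where a=a and b=b and t="-th" and m="s*th+de" and n=th] by simp

lemma riskv_lin:
  fixes A B D :: "real^'d^'d"
  shows "riskv D th de (\<lambda>x y. A *v x + B *v y) =
    ennreal ((\<Sum>i\<in>UNIV. \<Sum>j\<in>UNIV. (A$i$j)\<^sup>2 + (B$i$j)\<^sup>2) + (\<Sum>i\<in>UNIV. ((\<Sum>j\<in>UNIV. A$i$j * (D *v th + de)$j + B$i$j * th$j) - th$i)\<^sup>2))"
proof -
  let ?a = "D *v th + de"
  have mest: "(\<lambda>z. A *v fst z + B *v snd z) \<in> borel_measurable (borel \<Otimes>\<^sub>M borel)"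
  proof -
    have cA: "((*v) A) \<in> borel_measurable borel" by (rule borel_measurable_continuous_onI) (rule matrix_vector_mult_linear_continuous_on)
    have cB: "((*v) B) \<in> borel_measurable borel" by (rule borel_measurable_continuous_onI) (rule matrix_vector_mult_linear_continuous_on)
    show ?thesis by (intro borel_measurable_add measurable_compose[OF measurable_fst cA] measurable_compose[OF measurable_snd cB])
  qed
  have "riskv D th de (\<lambda>x y. A *v x + B *v y) = (\<Sum>i\<in>UNIV. \<integral>\<^sup>+\<omega>. ennreal (((A *v fst (XY \<omega>) + B *v snd (XY \<omega>)) $ i - th$i)\<^sup>2) \<partial>QQ ?a th)"
    by (rule riskv_coords[OF mest])
  also have "\<dots> = (\<Sum>i\<in>UNIV. ennreal ((\<Sum>j\<in>UNIV. (A$i$j)\<^sup>2 + (B$i$j)\<^sup>2) + ((\<Sum>j\<in>UNIV. A$i$j * ?a$j + B$i$j * th$j) - th$i)\<^sup>2))"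
  proof (intro sum.cong refl)
    fix i
    have eq: "((A *v fst (XY \<omega>) + B *v snd (XY \<omega>)) $ i - th$i) = (\<Sum>j\<in>UNIV. A$i$j * fst (\<omega> j) + B$i$j * snd (\<omega> j)) + (- th$i)" for \<omega>
      by (simp add: XY_def matrix_vector_mult_def sum.distrib)
    show "(\<integral>\<^sup>+\<omega>. ennreal (((A *v fst (XY \<omega>) + B *v snd (XY \<omega>)) $ i - th$i)\<^sup>2) \<partial>QQ ?a th) = ennreal ((\<Sum>j\<in>UNIV. (A$i$j)\<^sup>2 + (B$i$j)\<^sup>2) + ((\<Sum>j\<in>UNIV. A$i$j * ?a$j + B$i$j * th$j) - th$i)\<^sup>2)"
      unfolding eq QQ_def
      by (subst quad_PiM[where v="\<lambda>j. (A$i$j)\<^sup>2 + (B$i$j)\<^sup>2" and m="\<lambda>j. A$i$j * ?a$j + B$i$j * th$j"])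
         (auto simp: nn_integral_gauss_pair_quad)
  qed
  also have "\<dots> = ennreal ((\<Sum>i\<in>UNIV. \<Sum>j\<in>UNIV. (A$i$j)\<^sup>2 + (B$i$j)\<^sup>2) + (\<Sum>i\<in>UNIV. ((\<Sum>j\<in>UNIV. A$i$j * ?a$j + B$i$j * th$j) - th$i)\<^sup>2))"
    by (subst sum_ennreal) (auto intro!: sum_nonneg add_nonneg_nonneg simp: sum.distrib)
  finally show ?thesis .
qed

definition sgnb :: "bool \<Rightarrow> real" where "sgnb b = (if b then 1 else -1)"

lemma abs_sgnb[simp]: "\<bar>sgnb b\<bar> = 1" by (simp add: sgnb_def)

lemma mult_sgn_self: "(x::real) * sgn x = \<bar>x\<bar>"
  by (simp add: sgn_real_def abs_if)

lemma bern_quad: "(\<integral>\<^sup>+b. ennreal ((sgnb b * w + t)\<^sup>2) \<partial>bernoulli_pmf (1/2)) = ennreal (w\<^sup>2 + (0 + t)\<^sup>2)"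
proof -
  have "(\<integral>\<^sup>+b. ennreal ((sgnb b * w + t)\<^sup>2) \<partial>bernoulli_pmf (1/2)) = ennreal ((w + t)\<^sup>2) * ennreal (1/2) + ennreal ((-w + t)\<^sup>2) * ennreal (1/2)"
    by (simp add: sgnb_def)
  also have "\<dots> = ennreal ((w + t)\<^sup>2 * (1/2) + (-w + t)\<^sup>2 * (1/2))"
    by (simp only: ennreal_mult[symmetric, of "(w + t)\<^sup>2" "1/2"] ennreal_mult[symmetric, of "(-w + t)\<^sup>2" "1/2"] zero_le_power2 ennreal_plus[symmetric] mult_nonneg_nonneg)
  also have "(w + t)\<^sup>2 * (1/2) + (-w + t)\<^sup>2 * (1/2) = w\<^sup>2 + (0 + t)\<^sup>2"
    by (simp add: power2_eq_square algebra_simps)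
  finally show ?thesis .
qed

lemma wr1_lin_le:
  assumes "tau \<ge> 0" "zeta \<ge> 0"
  shows "worst_risk1 tau zeta s (\<lambda>u v. a * u + b * v) \<le> ennreal (a\<^sup>2 + b\<^sup>2 + (\<bar>a * s + b - 1\<bar> * tau + \<bar>a\<bar> * zeta)\<^sup>2)"
  unfolding worst_risk1_def
proof (intro SUP_least)
  fix th de assume th: "th \<in> {-tau..tau}" and de: "de \<in> {-zeta..zeta}"
  have "\<bar>a * (s * th + de) + b * th - th\<bar> = \<bar>(a * s + b - 1)*th + a*de\<bar>" by (simp add: algebra_simps)
  also have "\<dots> \<le> \<bar>a * s + b - 1\<bar> * \<bar>th\<bar> + \<bar>a\<bar> * \<bar>de\<bar>" by (metis abs_mult abs_triangle_ineq)
  also have "\<dots> \<le> \<bar>a * s + b - 1\<bar> * tau + \<bar>a\<bar> * zeta"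
    using th de by (intro add_mono mult_left_mono) auto
  finally have "(a * (s * th + de) + b * th - th)\<^sup>2 \<le> (\<bar>a * s + b - 1\<bar> * tau + \<bar>a\<bar> * zeta)\<^sup>2"
    by (metis abs_ge_zero abs_le_square_iff power2_abs abs_of_nonneg order_trans)
  then show "risk1 s th de (\<lambda>u v. a * u + b * v) \<le> ennreal (a\<^sup>2 + b\<^sup>2 + (\<bar>a * s + b - 1\<bar> * tau + \<bar>a\<bar> * zeta)\<^sup>2)"
    unfolding risk1_lin by (intro ennreal_leI) simp
qed

lemma wrv_lin_lower:
  fixes A B D :: "real^'d^'d" and tau zeta :: "real^'d"
  assumes D: "diag_mat D" and tz: "\<forall>i. tau$i \<ge> 0" "\<forall>i. zeta$i \<ge> 0"
  shows "ennreal ((\<Sum>i\<in>UNIV. \<Sum>j\<in>UNIV. (A$i$j)\<^sup>2 + (B$i$j)\<^sup>2) + (\<Sum>i\<in>UNIV. (\<bar>A$i$i * D$i$i + B$i$i - 1\<bar> * tau$i + \<bar>A$i$i\<bar> * zeta$i)\<^sup>2))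
         \<le> worst_riskv tau zeta D (\<lambda>x y. A *v x + B *v y)"
proof -
  define c where "c j = A$j$j * D$j$j + B$j$j - 1" for j
  define W where "W i j = (A$i$j * D$j$j + B$i$j - (if j = i then 1 else 0)) * sgn (c j) * tau$j + A$i$j * sgn (A$j$j) * zeta$j" for i j
  define th where "th \<epsilon> = (\<chi> j. sgnb (\<epsilon> j) * sgn (c j) * tau$j)" for \<epsilon> :: "'d \<Rightarrow> bool"
  define de where "de \<epsilon> = (\<chi> j. sgnb (\<epsilon> j) * sgn (A$j$j) * zeta$j)" for \<epsilon> :: "'d \<Rightarrow> bool"
  define S0 where "S0 = (\<Sum>i\<in>UNIV. \<Sum>j\<in>UNIV. (A$i$j)\<^sup>2 + (B$i$j)\<^sup>2)"
  let ?E = "PiM (UNIV::'d set) (\<lambda>_. measure_pmf (bernoulli_pmf (1/2)))"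
  let ?L = "\<lambda>x y. A *v x + B *v y"
  interpret E: prob_space ?E by (intro prob_space_PiM) (simp add: prob_space_measure_pmf)
  have sgn_le: "\<bar>sgn (x::real)\<bar> \<le> 1" for x by (simp add: abs_sgn)
  have inrect: "th \<epsilon> \<in> hrect tau" "de \<epsilon> \<in> hrect zeta" for \<epsilon>
  proof -
    show "th \<epsilon> \<in> hrect tau" unfolding hrect_def th_def
      using tz sgn_le by (auto simp: abs_mult intro!: mult_left_le_one_le)
    show "de \<epsilon> \<in> hrect zeta" unfolding hrect_def de_def
      using tz sgn_le by (auto simp: abs_mult intro!: mult_left_le_one_le)
  qed
  have bias: "(\<Sum>j\<in>UNIV. A$i$j * (D *v th \<epsilon> + de \<epsilon>)$j + B$i$j * th \<epsilon> $ j) - th \<epsilon> $ i = (\<Sum>j\<in>UNIV. sgnb (\<epsilon> j) * W i j) + 0" for \<epsilon> i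
  proof -
    have "th \<epsilon> $ i = (\<Sum>j\<in>UNIV. if j = i then th \<epsilon> $ j else 0)" by simp
    then have "(\<Sum>j\<in>UNIV. A$i$j * (D *v th \<epsilon> + de \<epsilon>)$j + B$i$j * th \<epsilon> $ j) - th \<epsilon> $ i = (\<Sum>j\<in>UNIV. A$i$j * (D *v th \<epsilon> + de \<epsilon>)$j + B$i$j * th \<epsilon> $ j - (if j = i then th \<epsilon> $ j else 0))"
      by (simp add: sum_subtractf)
    also have "\<dots> = (\<Sum>j\<in>UNIV. sgnb (\<epsilon> j) * W i j)"
      by (intro sum.cong refl) (simp add: diag_mult[OF D] W_def th_def de_def algebra_simps)
    finally show ?thesis by simp
  qed
  have risk_eq: "riskv D (th \<epsilon>) (de \<epsilon>) ?L = ennreal S0 + (\<Sum>i\<in>UNIV. ennreal (((\<Sum>j\<in>UNIV. sgnb (\<epsilon> j) * W i j) + 0)\<^sup>2))" for \<epsilon>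
    unfolding riskv_lin bias
    by (simp add: S0_def ennreal_plus[symmetric] sum_nonneg del: ennreal_plus)
  have mE: "(\<lambda>\<epsilon>. ennreal (((\<Sum>j\<in>UNIV. sgnb (\<epsilon> j) * W i j) + 0)\<^sup>2)) \<in> borel_measurable ?E" for i
  proof -
    have "(\<lambda>\<epsilon>. (\<Sum>j\<in>UNIV. sgnb (\<epsilon> j) * W i j)) \<in> borel_measurable ?E"
      by (intro borel_measurable_sum measurable_compose[OF measurable_component_singleton]) auto
    then show ?thesis by measurable
  qed
  have int: "(\<integral>\<^sup>+\<epsilon>. riskv D (th \<epsilon>) (de \<epsilon>) ?L \<partial>?E) = ennreal S0 + (\<Sum>i\<in>UNIV. ennreal (\<Sum>j\<in>UNIV. (W i j)\<^sup>2))"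
  proof -
    have "(\<integral>\<^sup>+\<epsilon>. riskv D (th \<epsilon>) (de \<epsilon>) ?L \<partial>?E) = (\<integral>\<^sup>+\<epsilon>. ennreal S0 + (\<Sum>i\<in>UNIV. ennreal (((\<Sum>j\<in>UNIV. sgnb (\<epsilon> j) * W i j) + 0)\<^sup>2)) \<partial>?E)"
      using risk_eq by simp
    also have "\<dots> = ennreal S0 + (\<Sum>i\<in>UNIV. \<integral>\<^sup>+\<epsilon>. ennreal (((\<Sum>j\<in>UNIV. sgnb (\<epsilon> j) * W i j) + 0)\<^sup>2) \<partial>?E)"
    proof -
      define q where "q i \<epsilon> = ((\<Sum>j\<in>UNIV. sgnb (\<epsilon> j) * W i j) + 0)\<^sup>2" for i \<epsilon>
      have mq: "(\<lambda>\<epsilon>. ennreal (q i \<epsilon>)) \<in> borel_measurable ?E" for i using mE[of i] by (simp add: q_def)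
      have s1: "(\<integral>\<^sup>+\<epsilon>. (\<Sum>i\<in>UNIV. ennreal (q i \<epsilon>)) \<partial>?E) = (\<Sum>i\<in>UNIV. \<integral>\<^sup>+\<epsilon>. ennreal (q i \<epsilon>) \<partial>?E)"
        by (rule nn_integral_sum) (use mq in auto)
      have s0: "(\<integral>\<^sup>+\<epsilon>. ennreal S0 + (\<Sum>i\<in>UNIV. ennreal (q i \<epsilon>)) \<partial>?E) = (\<integral>\<^sup>+\<epsilon>. ennreal S0 \<partial>?E) + (\<integral>\<^sup>+\<epsilon>. (\<Sum>i\<in>UNIV. ennreal (q i \<epsilon>)) \<partial>?E)"
        by (rule nn_integral_add) (use mq in auto)
      have s2: "(\<integral>\<^sup>+\<epsilon>. ennreal S0 \<partial>?E) = ennreal S0" by (simp add: E.emeasure_space_1)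
      show ?thesis using s0 s1 s2 by (simp only: q_def)
    qed
    also have "\<dots> = ennreal S0 + (\<Sum>i\<in>UNIV. ennreal (\<Sum>j\<in>UNIV. (W i j)\<^sup>2))"
    proof -
      have "(\<integral>\<^sup>+\<epsilon>. ennreal (((\<Sum>j\<in>UNIV. sgnb (\<epsilon> j) * W i j) + 0)\<^sup>2) \<partial>?E) = ennreal (\<Sum>j\<in>UNIV. (W i j)\<^sup>2)" for i
        using quad_PiM[where I=UNIV and M="\<lambda>_. measure_pmf (bernoulli_pmf (1/2))" and f="\<lambda>j b. sgnb b * W i j"
            and v="\<lambda>j. (W i j)\<^sup>2" and m="\<lambda>j. 0" and c=0]
        by (simp add: prob_space_measure_pmf bern_quad)
      then show ?thesis by simp
    qed
    finally show ?thesis .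
  qed
  have le: "(\<integral>\<^sup>+\<epsilon>. riskv D (th \<epsilon>) (de \<epsilon>) ?L \<partial>?E) \<le> worst_riskv tau zeta D ?L"
  proof -
    have "(\<integral>\<^sup>+\<epsilon>. riskv D (th \<epsilon>) (de \<epsilon>) ?L \<partial>?E) \<le> (\<integral>\<^sup>+\<epsilon>. worst_riskv tau zeta D ?L \<partial>?E)"
      unfolding worst_riskv_def
    proof (intro nn_integral_mono)
      fix \<epsilon>
      show "riskv D (th \<epsilon>) (de \<epsilon>) ?L \<le> (\<Squnion>th\<in>hrect tau. \<Squnion>de\<in>hrect zeta. riskv D th de ?L)"
        by (rule SUP_upper2[OF inrect(1)[of \<epsilon>]]) (rule SUP_upper[OF inrect(2)[of \<epsilon>]])
    qed
    also have "\<dots> = worst_riskv tau zeta D ?L" by (simp add: E.emeasure_space_1)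
    finally show ?thesis .
  qed
  have diag: "(\<Sum>i\<in>UNIV. (\<bar>A$i$i * D$i$i + B$i$i - 1\<bar> * tau$i + \<bar>A$i$i\<bar> * zeta$i)\<^sup>2) \<le> (\<Sum>i\<in>UNIV. \<Sum>j\<in>UNIV. (W i j)\<^sup>2)"
  proof (intro sum_mono)
    fix i :: 'd
    have "W i i = c i * sgn (c i) * tau$i + A$i$i * sgn (A$i$i) * zeta$i" by (simp add: W_def c_def)
    also have "\<dots> = \<bar>A$i$i * D$i$i + B$i$i - 1\<bar> * tau$i + \<bar>A$i$i\<bar> * zeta$i"
      by (simp add: mult_sgn_self c_def)
    finally have "W i i = \<bar>A$i$i * D$i$i + B$i$i - 1\<bar> * tau$i + \<bar>A$i$i\<bar> * zeta$i" .
    then show "(\<bar>A$i$i * D$i$i + B$i$i - 1\<bar> * tau$i + \<bar>A$i$i\<bar> * zeta$i)\<^sup>2 \<le> (\<Sum>j\<in>UNIV. (W i j)\<^sup>2)"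
      using member_le_sum[of i UNIV "\<lambda>j. (W i j)\<^sup>2"] by simp
  qed
  have "ennreal ((\<Sum>i\<in>UNIV. \<Sum>j\<in>UNIV. (A$i$j)\<^sup>2 + (B$i$j)\<^sup>2) + (\<Sum>i\<in>UNIV. (\<bar>A$i$i * D$i$i + B$i$i - 1\<bar> * tau$i + \<bar>A$i$i\<bar> * zeta$i)\<^sup>2))
      \<le> ennreal (S0 + (\<Sum>i\<in>UNIV. \<Sum>j\<in>UNIV. (W i j)\<^sup>2))"
    using diag by (intro ennreal_leI) (simp add: S0_def)
  also have "\<dots> = ennreal S0 + (\<Sum>i\<in>UNIV. ennreal (\<Sum>j\<in>UNIV. (W i j)\<^sup>2))"
    by (simp add: S0_def ennreal_plus[symmetric] sum_nonneg del: ennreal_plus)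
  also have "\<dots> \<le> worst_riskv tau zeta D ?L" using int le by simp
  finally show ?thesis .
qed

lemma open_halfcombo: "open {\<beta>::real. \<beta> * x + (1 - \<beta>) * y < 0}"
  by (rule open_Collect_less) (auto intro!: continuous_intros)

lemma minimax_merge_exists:
  fixes f :: "'p \<Rightarrow> 'e \<Rightarrow> real"
  assumes ab: "a \<noteq> b"
    and conv: "\<And>e1 e2 \<mu>. e1 \<in> E \<Longrightarrow> e2 \<in> E \<Longrightarrow> 0 \<le> \<mu> \<Longrightarrow> \<mu> \<le> 1 \<Longrightarrow> \<exists>e\<in>E. \<forall>s\<in>insert a S. f s e \<le> \<mu> * f s e1 + (1 - \<mu>) * f s e2"
    and nn: "\<And>e. e \<in> E \<Longrightarrow> \<exists>s\<in>insert a S. 0 \<le> f s e"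
    and bS: "b \<in> S"
  shows "\<exists>\<beta>. 0 \<le> \<beta> \<and> \<beta> \<le> 1 \<and> (\<forall>e\<in>E. \<exists>s\<in>S. 0 \<le> (if s = b then \<beta> * f b e + (1 - \<beta>) * f a e else f s e))"
proof (rule ccontr)
  assume "\<not> ?thesis"
  then have H: "\<And>\<beta>. 0 \<le> \<beta> \<Longrightarrow> \<beta> \<le> 1 \<Longrightarrow> \<exists>e\<in>E. \<forall>s\<in>S. (if s = b then \<beta> * f b e + (1 - \<beta>) * f a e else f s e) < 0"
    by (meson not_le)
  define Q where "Q e \<longleftrightarrow> e \<in> E \<and> (\<forall>s\<in>S - {b}. f s e < 0)" for e
  define U1 where "U1 = (\<Union>e\<in>{e. Q e \<and> f b e < 0}. {\<beta>::real. \<beta> * f b e + (1 - \<beta>) * f a e < 0})"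
  define U2 where "U2 = (\<Union>e\<in>{e. Q e \<and> f a e < 0}. {\<beta>::real. \<beta> * f b e + (1 - \<beta>) * f a e < 0})"
  have QI: "Q e" if "e \<in> E" "\<forall>s\<in>S. (if s = b then X else f s e) < 0" for e X
    unfolding Q_def
  proof (intro conjI ballI)
    fix s assume "s \<in> S - {b}"
    then show "f s e < 0" using that(2)[rule_format, of s] by simp
  qed (use that in simp)
  have oU1: "open U1" unfolding U1_def by (intro open_UN ballI open_halfcombo)
  have oU2: "open U2" unfolding U2_def by (intro open_UN ballI open_halfcombo)
  have cover: "{0..1} \<subseteq> U1 \<union> U2"
  proof
    fix \<beta> :: real assume "\<beta> \<in> {0..1}"
    then obtain e where e: "e \<in> E" "\<forall>s\<in>S. (if s = b then \<beta> * f b e + (1 - \<beta>) * f a e else f s e) < 0"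
      using H by auto
    have Qe: "Q e" unfolding Q_def
    proof (intro conjI ballI)
      fix s assume "s \<in> S - {b}"
      then show "f s e < 0" using e(2)[rule_format, of s] by simp
    qed (use e in simp)
    have c: "\<beta> * f b e + (1 - \<beta>) * f a e < 0" using e(2) bS by auto
    show "\<beta> \<in> U1 \<union> U2"
    proof (cases "f b e < 0")
      case True then show ?thesis using Qe c unfolding U1_def by blast
    next
      case False
      have "f a e < 0"
      proof (rule ccontr)
        assume "\<not> f a e < 0"
        then have "0 \<le> \<beta> * f b e + (1 - \<beta>) * f a e"
          using False \<open>\<beta> \<in> {0..1}\<close> by (intro add_nonneg_nonneg mult_nonneg_nonneg) auto
        with c show False by simp
      qed
      then show ?thesis using Qe c unfolding U2_def by blast
    qed
  qed
  have ne1: "U1 \<inter> {0..1} \<noteq> {}"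
  proof -
    obtain e where e: "e \<in> E" "\<forall>s\<in>S. (if s = b then 1 * f b e + (1 - 1) * f a e else f s e) < 0"
      using H[of 1] by auto
    then have "Q e" "f b e < 0" using bS QI by auto
    then have "1 \<in> U1" unfolding U1_def by auto
    then show ?thesis by auto
  qed
  have ne2: "U2 \<inter> {0..1} \<noteq> {}"
  proof -
    obtain e where e: "e \<in> E" "\<forall>s\<in>S. (if s = b then 0 * f b e + (1 - 0) * f a e else f s e) < 0"
      using H[of 0] by auto
    then have "Q e" "f a e < 0" using bS QI by auto
    then have "0 \<in> U2" unfolding U2_def by auto
    then show ?thesis by auto
  qed
  have "U1 \<inter> U2 \<inter> {0..1} \<noteq> {}"
    using connectedD[OF connected_Icc oU1 oU2 _ cover] ne1 ne2 by blast
  then obtain \<beta> e1 e2 where \<beta>: "0 \<le> \<beta>" "\<beta> \<le> 1"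
    and e1: "Q e1" "f b e1 < 0" "\<beta> * f b e1 + (1 - \<beta>) * f a e1 < 0"
    and e2: "Q e2" "f a e2 < 0" "\<beta> * f b e2 + (1 - \<beta>) * f a e2 < 0"
    unfolding U1_def U2_def by auto
  have allneg: "\<not> (\<forall>s\<in>insert a S. f s e < 0)" if "e \<in> E" for e
    using nn[OF that] by force
  have a1: "0 \<le> f a e1"
  proof (rule ccontr)
    assume "\<not> 0 \<le> f a e1"
    then have "\<forall>s\<in>insert a S. f s e1 < 0" using e1 by (auto simp: Q_def)
    with allneg e1 show False by (auto simp: Q_def)
  qed
  have b2: "0 \<le> f b e2"
  proof (rule ccontr)
    assume "\<not> 0 \<le> f b e2"
    then have "\<forall>s\<in>insert a S. f s e2 < 0" using e2 by (auto simp: Q_def)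
    with allneg e2 show False by (auto simp: Q_def)
  qed
  define d1 where "d1 = f b e1 - f a e1"
  define d2 where "d2 = f b e2 - f a e2"
  have d1: "d1 < 0" using a1 e1 by (simp add: d1_def)
  have d2: "d2 > 0" using b2 e2 by (simp add: d2_def)
  define \<mu> where "\<mu> = d2 / (d2 - d1)"
  have \<mu>: "0 \<le> \<mu>" "\<mu> \<le> 1" using d1 d2 by (auto simp: \<mu>_def divide_simps)
  have \<mu>eq: "\<mu> * d1 + (1 - \<mu>) * d2 = 0" using d1 d2 by (simp add: \<mu>_def field_simps)
  obtain e where eE: "e \<in> E" and e: "\<forall>s\<in>insert a S. f s e \<le> \<mu> * f s e1 + (1 - \<mu>) * f s e2"
    using conv[of e1 e2 \<mu>] e1(1) e2(1) \<mu> by (auto simp: Q_def)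
  define Ra where "Ra = \<mu> * f a e1 + (1 - \<mu>) * f a e2"
  define Rb where "Rb = \<mu> * f b e1 + (1 - \<mu>) * f b e2"
  have RaRb: "Rb = Ra" using \<mu>eq by (simp add: Ra_def Rb_def d1_def d2_def algebra_simps)
  have "\<beta> * Rb + (1 - \<beta>) * Ra = \<mu> * (\<beta> * f b e1 + (1 - \<beta>) * f a e1) + (1 - \<mu>) * (\<beta> * f b e2 + (1 - \<beta>) * f a e2)"
    by (simp add: Ra_def Rb_def algebra_simps)
  also have "\<dots> < 0"
  proof (cases "\<mu> = 0")
    case True then show ?thesis using e2 by simp
  next
    case False
    then have "\<mu> * (\<beta> * f b e1 + (1 - \<beta>) * f a e1) < 0" using \<mu> e1 by (simp add: mult_pos_neg)
    moreover have "(1 - \<mu>) * (\<beta> * f b e2 + (1 - \<beta>) * f a e2) \<le> 0" using \<mu> e2 by (simp add: mult_nonneg_nonpos)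
    ultimately show ?thesis by linarith
  qed
  finally have "Ra < 0" using RaRb by (simp add: algebra_simps)
  have "\<forall>s\<in>insert a S. f s e < 0"
  proof
    fix s assume s: "s \<in> insert a S"
    show "f s e < 0"
    proof (cases "s = a \<or> s = b")
      case True
      then show ?thesis using e s \<open>Ra < 0\<close> RaRb bS unfolding Ra_def Rb_def by fastforce
    next
      case False
      then have "s \<in> S - {b}" using s by auto
      then have "f s e1 < 0" "f s e2 < 0" using e1(1) e2(1) by (auto simp: Q_def)
      then have "\<mu> * f s e1 + (1 - \<mu>) * f s e2 < 0"
      proof (cases "\<mu> = 0")
        case False
        then have "\<mu> * f s e1 < 0" using \<mu> \<open>f s e1 < 0\<close> by (simp add: mult_pos_neg)
        moreover have "(1 - \<mu>) * f s e2 \<le> 0" using \<mu> \<open>f s e2 < 0\<close> by (simp add: mult_nonneg_nonpos)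
        ultimately show ?thesis by linarith
      qed (use \<open>f s e2 < 0\<close> in simp)
      then show ?thesis using e s by fastforce
    qed
  qed
  with allneg eE show False by blast
qed

lemma finite_minimax:
  fixes f :: "'p \<Rightarrow> 'e \<Rightarrow> real"
  assumes "finite S" "S \<noteq> {}"
    and "\<And>e1 e2 \<mu>. e1 \<in> E \<Longrightarrow> e2 \<in> E \<Longrightarrow> 0 \<le> \<mu> \<Longrightarrow> \<mu> \<le> 1 \<Longrightarrow> \<exists>e\<in>E. \<forall>s\<in>S. f s e \<le> \<mu> * f s e1 + (1 - \<mu>) * f s e2"
    and "\<And>e. e \<in> E \<Longrightarrow> \<exists>s\<in>S. 0 \<le> f s e"
  shows "\<exists>w. (\<forall>s\<in>S. 0 \<le> w s) \<and> sum w S = 1 \<and> (\<forall>e\<in>E. 0 \<le> (\<Sum>s\<in>S. w s * f s e))"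
  using assms
proof (induction S arbitrary: f rule: finite_ne_induct)
  case (singleton a)
  then show ?case by (intro exI[of _ "\<lambda>_. 1"]) auto
next
  case (insert a S)
  obtain b where bS: "b \<in> S" using insert.hyps(2) by auto
  have ab: "a \<noteq> b" using bS insert.hyps(3) by auto
  obtain \<beta> where \<beta>: "0 \<le> \<beta>" "\<beta> \<le> 1"
    and nn': "\<forall>e\<in>E. \<exists>s\<in>S. 0 \<le> (if s = b then \<beta> * f b e + (1 - \<beta>) * f a e else f s e)"
    using minimax_merge_exists[OF ab insert.prems(1) insert.prems(2) bS] by blast
  define g where "g s e = (if s = b then \<beta> * f b e + (1 - \<beta>) * f a e else f s e)" for s e
  have conv': "\<exists>e\<in>E. \<forall>s\<in>S. g s e \<le> \<mu> * g s e1 + (1 - \<mu>) * g s e2"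
    if h: "e1 \<in> E" "e2 \<in> E" "0 \<le> \<mu>" "\<mu> \<le> 1" for e1 e2 \<mu>
  proof -
    obtain e where e: "e \<in> E" "\<forall>s\<in>insert a S. f s e \<le> \<mu> * f s e1 + (1 - \<mu>) * f s e2"
      using insert.prems(1)[OF h] by blast
    have "g s e \<le> \<mu> * g s e1 + (1 - \<mu>) * g s e2" if s: "s \<in> S" for s
    proof (cases "s = b")
      case True
      have "\<beta> * f b e \<le> \<beta> * (\<mu> * f b e1 + (1 - \<mu>) * f b e2)"
        using e(2) bS \<beta> by (intro mult_left_mono) auto
      moreover have "(1 - \<beta>) * f a e \<le> (1 - \<beta>) * (\<mu> * f a e1 + (1 - \<mu>) * f a e2)"
        using e(2) \<beta> by (intro mult_left_mono) auto
      ultimately show ?thesis using True by (simp add: g_def algebra_simps)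
    next
      case False
      then show ?thesis using e(2) s by (simp add: g_def)
    qed
    then show ?thesis using e(1) by blast
  qed
  have nn'': "\<exists>s\<in>S. 0 \<le> g s e" if "e \<in> E" for e using nn' that by (simp add: g_def)
  obtain w' where w': "\<forall>s\<in>S. 0 \<le> w' s" "sum w' S = 1" "\<forall>e\<in>E. 0 \<le> (\<Sum>s\<in>S. w' s * g s e)"
    using insert.IH[of g] conv' nn'' by blast
  define w where "w s = (if s = a then (1 - \<beta>) * w' b else if s = b then \<beta> * w' b else w' s)" for s
  have sumS: "(\<Sum>s\<in>S. h s) = h b + (\<Sum>s\<in>S - {b}. h s)" for h :: "'p \<Rightarrow> real"
    using bS insert.hyps(1) by (simp add: sum.remove)
  have wS: "(\<Sum>s\<in>S - {b}. w s * k s) = (\<Sum>s\<in>S - {b}. w' s * k s)" for k :: "'p \<Rightarrow> real"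
    using insert.hyps(3) by (intro sum.cong) (auto simp: w_def)
  have gS: "(\<Sum>s\<in>S - {b}. w' s * g s e) = (\<Sum>s\<in>S - {b}. w' s * f s e)" for e
    by (intro sum.cong) (auto simp: g_def)
  show ?case
  proof (intro exI[of _ w] conjI ballI)
    fix s assume "s \<in> insert a S"
    then show "0 \<le> w s" using w'(1) bS \<beta> by (auto simp: w_def)
  next
    have "sum w (insert a S) = w a + (w b + (\<Sum>s\<in>S - {b}. w s * 1))"
      using insert.hyps by (simp add: sumS[of w])
    also have "\<dots> = (1 - \<beta>) * w' b + (\<beta> * w' b + (\<Sum>s\<in>S - {b}. w' s * 1))"
      using ab by (simp only: wS) (simp add: w_def)
    also have "\<dots> = w' b + (\<Sum>s\<in>S - {b}. w' s)" by (simp add: algebra_simps)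
    also have "\<dots> = 1" using w'(2) sumS[of w'] by simp
    finally show "sum w (insert a S) = 1" .
  next
    fix e assume eE: "e \<in> E"
    have "(\<Sum>s\<in>insert a S. w s * f s e) = w a * f a e + (w b * f b e + (\<Sum>s\<in>S - {b}. w s * f s e))"
      using insert.hyps by (simp add: sumS[of "\<lambda>s. w s * f s e"])
    also have "\<dots> = w' b * g b e + (\<Sum>s\<in>S - {b}. w' s * g s e)"
      using ab by (simp only: wS gS) (simp add: w_def g_def algebra_simps)
    also have "\<dots> = (\<Sum>s\<in>S. w' s * g s e)" using sumS[of "\<lambda>s. w' s * g s e"] by simp
    finally show "0 \<le> (\<Sum>s\<in>insert a S. w s * f s e)" using w'(3) eE by simp
  qed
qed

lemma nd_sq:
  "(normal_density a 1 x)\<^sup>2 = exp ((a - b)\<^sup>2) * normal_density (2*a - b) 1 x * normal_density b 1 x"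
proof -
  have e: "-(x - a)\<^sup>2 = (a - b)\<^sup>2 + (-(x - (2*a-b))\<^sup>2 / 2) + (-(x - b)\<^sup>2 / 2)"
    by (simp add: power2_eq_square field_simps)
  have "(normal_density a 1 x)\<^sup>2 = (1 / sqrt (2 * pi))\<^sup>2 * exp (-(x - a)\<^sup>2)"
  proof -
    have "(exp (- ((x - a)\<^sup>2 / 2)))\<^sup>2 = exp (-(x - a)\<^sup>2)"
      by (simp add: power2_eq_square[of "exp _"] mult_exp_exp)
    then show ?thesis by (simp add: normal_density_def power_divide)
  qed
  also have "\<dots> = (1 / sqrt (2 * pi))\<^sup>2 * (exp ((a - b)\<^sup>2) * exp (-(x - (2*a-b))\<^sup>2 / 2) * exp (-(x - b)\<^sup>2 / 2))"
    unfolding e by (simp only: exp_add)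
  also have "\<dots> = exp ((a - b)\<^sup>2) * normal_density (2*a - b) 1 x * normal_density b 1 x"
    by (simp add: normal_density_def power2_eq_square algebra_simps)
  finally show ?thesis .
qed

lemma sq_div_aux: "(q::real) \<noteq> 0 \<Longrightarrow> (p - q)\<^sup>2 / q = p\<^sup>2 / q - 2 * p + q"
  by (simp add: field_simps power2_eq_square)

lemma amgm_abs:
  fixes p q d :: real
  assumes "q > 0" "d > 0"
  shows "\<bar>p - q\<bar> \<le> d / 2 * q + (p - q)\<^sup>2 / q / (2 * d)"
proof -
  have "0 \<le> (\<bar>p - q\<bar> - d * q)\<^sup>2" by simp
  then have "2 * d * q * \<bar>p - q\<bar> \<le> (p - q)\<^sup>2 + d\<^sup>2 * q\<^sup>2"
    by (simp add: power2_eq_square algebra_simps abs_mult_self_eq)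
  then show ?thesis using assms by (simp add: field_simps power2_eq_square)
qed

lemma tv_gauss:
  assumes ab: "\<bar>a - b\<bar> \<le> 1"
  shows "(\<integral>\<^sup>+x. ennreal \<bar>normal_density a 1 x - normal_density b 1 x\<bar> \<partial>lborel) \<le> ennreal (2 * \<bar>a - b\<bar>)"
proof (cases "a = b")
  case True then show ?thesis by simp
next
  case False
  define d where "d = \<bar>a - b\<bar>"
  have d: "d > 0" "d \<le> 1" using False ab by (auto simp: d_def)
  define E where "E = exp ((a - b)\<^sup>2)"
  let ?pa = "normal_density a 1" and ?pb = "normal_density b 1" and ?pc = "normal_density (2*a-b) 1"
  define R where "R x = d / 2 * ?pb x + (E * ?pc x - 2 * ?pa x + ?pb x) / (2 * d)" for x
  have pt: "\<bar>?pa x - ?pb x\<bar> \<le> R x" for x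
  proof -
    have q: "?pb x > 0" by (simp add: normal_density_pos)
    have s1: "(?pa x - ?pb x)\<^sup>2 / ?pb x = (?pa x)\<^sup>2 / ?pb x - 2 * ?pa x + ?pb x"
      using q by (rule sq_div_aux[OF less_imp_neq[symmetric]])
    have s2: "(?pa x)\<^sup>2 / ?pb x = E * ?pc x"
      using q unfolding nd_sq[of a x b] E_def by simp
    have "(?pa x - ?pb x)\<^sup>2 / ?pb x = E * ?pc x - 2 * ?pa x + ?pb x"
      using s1 s2 by simp
    then show ?thesis using amgm_abs[OF q d(1), of "?pa x"] by (simp add: R_def)
  qed
  have intR: "integrable lborel R"
    unfolding R_def by (intro Bochner_Integration.integrable_add Bochner_Integration.integrable_diff integrable_mult_right integrable_divide integrable_normal_density) auto
  have IR: "(\<integral>x. R x \<partial>lborel) = d / 2 + (E - 1) / (2 * d)"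
  proof -
    have ia: "integrable lborel ?pa" and ib: "integrable lborel ?pb" and ic: "integrable lborel ?pc" by auto
    have "(\<integral>x. E * ?pc x - 2 * ?pa x + ?pb x \<partial>lborel) = (\<integral>x. E * ?pc x - 2 * ?pa x \<partial>lborel) + (\<integral>x. ?pb x \<partial>lborel)"
      by (rule Bochner_Integration.integral_add) (use ia ib ic in auto)
    also have "(\<integral>x. E * ?pc x - 2 * ?pa x \<partial>lborel) = (\<integral>x. E * ?pc x \<partial>lborel) - (\<integral>x. 2 * ?pa x \<partial>lborel)"
      by (rule Bochner_Integration.integral_diff) (use ia ic in auto)
    finally have j: "(\<integral>x. E * ?pc x - 2 * ?pa x + ?pb x \<partial>lborel) = E - 2 + 1" by simp
    have "(\<integral>x. R x \<partial>lborel) = (\<integral>x. d / 2 * ?pb x \<partial>lborel) + (\<integral>x. (E * ?pc x - 2 * ?pa x + ?pb x) / (2 * d) \<partial>lborel)"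
      unfolding R_def by (rule Bochner_Integration.integral_add) (use ia ib ic in auto)
    also have "\<dots> = d / 2 + (E - 1) / (2 * d)"
      using j by simp
    finally show ?thesis .
  qed
  have Ebound: "E - 1 \<le> 2 * d\<^sup>2"
  proof -
    have "(a - b)\<^sup>2 = d\<^sup>2" by (simp add: d_def)
    moreover have "d\<^sup>2 \<le> 1" using d by (simp add: power_le_one)
    ultimately have "E \<le> 1 + d\<^sup>2 + (d\<^sup>2)\<^sup>2" unfolding E_def using exp_bound[of "d\<^sup>2"] by simp
    moreover have "(d\<^sup>2)\<^sup>2 \<le> d\<^sup>2" using d \<open>d\<^sup>2 \<le> 1\<close> by (simp add: power2_eq_square mult_left_le_one_le)
    ultimately show ?thesis by simp
  qed
  have "(\<integral>\<^sup>+x. ennreal \<bar>?pa x - ?pb x\<bar> \<partial>lborel) \<le> (\<integral>\<^sup>+x. ennreal (R x) \<partial>lborel)"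
    by (intro nn_integral_mono ennreal_leI pt)
  also have "\<dots> = ennreal (\<integral>x. R x \<partial>lborel)"
    by (rule nn_integral_eq_integral[OF intR]) (auto intro: order_trans[OF abs_ge_zero pt])
  also have "\<dots> \<le> ennreal (2 * \<bar>a - b\<bar>)"
  proof (intro ennreal_leI)
    have "(E - 1) / (2 * d) \<le> 2 * d\<^sup>2 / (2 * d)" using Ebound d by (intro divide_right_mono) auto
    also have "\<dots> = d" using d by (simp add: power2_eq_square)
    finally have "(E - 1) / (2 * d) \<le> d" .
    then show "(\<integral>x. R x \<partial>lborel) \<le> 2 * \<bar>a - b\<bar>" unfolding IR d_def[symmetric] using d by linarith
  qed
  finally show ?thesis .
qed

lemma gauss1_shift:
  fixes G :: "real \<Rightarrow> ennreal"
  assumes G: "G \<in> borel_measurable borel" "\<And>x. G x \<le> ennreal H" and H: "H \<ge> 0" and ab: "\<bar>a - b\<bar> \<le> 1"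
  shows "(\<integral>\<^sup>+x. G x \<partial>gauss1 a) \<le> (\<integral>\<^sup>+x. G x \<partial>gauss1 b) + ennreal (2 * H * \<bar>a - b\<bar>)"
proof -
  let ?pa = "normal_density a 1" and ?pb = "normal_density b 1"
  have pt: "ennreal (?pa x) * G x \<le> ennreal (?pb x) * G x + ennreal \<bar>?pa x - ?pb x\<bar> * ennreal H" for x
  proof -
    have "ennreal (?pa x) \<le> ennreal (?pb x + \<bar>?pa x - ?pb x\<bar>)" by (intro ennreal_leI) simp
    also have "\<dots> = ennreal (?pb x) + ennreal \<bar>?pa x - ?pb x\<bar>" by (simp add: ennreal_plus)
    finally have "ennreal (?pa x) * G x \<le> (ennreal (?pb x) + ennreal \<bar>?pa x - ?pb x\<bar>) * G x"
      by (intro mult_right_mono) auto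
    also have "\<dots> = ennreal (?pb x) * G x + ennreal \<bar>?pa x - ?pb x\<bar> * G x" by (simp add: distrib_right)
    also have "\<dots> \<le> ennreal (?pb x) * G x + ennreal \<bar>?pa x - ?pb x\<bar> * ennreal H"
      using G(2) by (intro add_left_mono mult_left_mono) auto
    finally show ?thesis .
  qed
  have "(\<integral>\<^sup>+x. G x \<partial>gauss1 a) = (\<integral>\<^sup>+x. ennreal (?pa x) * G x \<partial>lborel)"
    unfolding gauss1_def using G(1) by (subst nn_integral_density) auto
  also have "\<dots> \<le> (\<integral>\<^sup>+x. ennreal (?pb x) * G x + ennreal \<bar>?pa x - ?pb x\<bar> * ennreal H \<partial>lborel)"
    by (intro nn_integral_mono pt)
  also have "\<dots> = (\<integral>\<^sup>+x. ennreal (?pb x) * G x \<partial>lborel) + (\<integral>\<^sup>+x. ennreal \<bar>?pa x - ?pb x\<bar> \<partial>lborel) * ennreal H"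
    using G(1) by (subst nn_integral_add) (auto simp: nn_integral_multc)
  also have "(\<integral>\<^sup>+x. ennreal (?pb x) * G x \<partial>lborel) = (\<integral>\<^sup>+x. G x \<partial>gauss1 b)"
    unfolding gauss1_def using G(1) by (subst nn_integral_density) auto
  also have "(\<integral>\<^sup>+x. ennreal \<bar>?pa x - ?pb x\<bar> \<partial>lborel) * ennreal H \<le> ennreal (2 * \<bar>a - b\<bar>) * ennreal H"
    by (intro mult_right_mono tv_gauss ab) simp
  also have "ennreal (2 * \<bar>a - b\<bar>) * ennreal H = ennreal (2 * H * \<bar>a - b\<bar>)"
    using H by (simp add: ennreal_mult[symmetric] mult_ac)
  finally show ?thesis by (simp add: add_left_mono)
qed

lemma risk1_cont:
  assumes me: "(\<lambda>z. e (fst z) (snd z)) \<in> borel_measurable (borel \<Otimes>\<^sub>M borel)"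
    and eT: "\<And>u v. \<bar>e u v\<bar> \<le> T" and th: "\<bar>th\<bar> \<le> T" "\<bar>th'\<bar> \<le> T"
    and d1: "\<bar>th - th'\<bar> \<le> 1" and d2: "\<bar>(s*th+de) - (s*th'+de')\<bar> \<le> 1"
  shows "risk1 s th de e \<le> risk1 s th' de' e + ennreal (4*T*\<bar>th - th'\<bar> + 8*T\<^sup>2*\<bar>th - th'\<bar> + 8*T\<^sup>2*\<bar>(s*th+de) - (s*th'+de')\<bar>)"
proof -
  define m where "m = s*th+de"
  define m' where "m' = s*th'+de'"
  define H where "H = 4 * T\<^sup>2"
  have T: "T \<ge> 0" using th by linarith
  have H: "H \<ge> 0" by (simp add: H_def)
  interpret Gt: prob_space "gauss1 th" by simp
  interpret Gt': prob_space "gauss1 th'" by simp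
  interpret Gm: prob_space "gauss1 m" by simp
  have me': "(\<lambda>(u, v). e u v) \<in> borel_measurable (borel \<Otimes>\<^sub>M borel)" using me by (simp add: case_prod_beta)
  have mv: "(\<lambda>v. e u v) \<in> borel_measurable borel" for u
    using measurable_Pair2[OF me', of u] by simp
  have mF: "(\<lambda>z. ennreal ((e (fst z) (snd z) - c)\<^sup>2)) \<in> borel_measurable (borel \<Otimes>\<^sub>M borel)" for c
    using me by measurable
  have sq_bound: "(e u v - c)\<^sup>2 \<le> H" if "\<bar>c\<bar> \<le> T" for u v c
  proof -
    have "\<bar>e u v - c\<bar> \<le> 2 * T" using eT[of u v] that by linarith
    then have "\<bar>e u v - c\<bar>\<^sup>2 \<le> (2 * T)\<^sup>2" by (intro power_mono) auto
    then show ?thesis by (simp add: H_def power_mult_distrib)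
  qed
  have step1: "(e u v - th)\<^sup>2 \<le> (e u v - th')\<^sup>2 + 4 * T * \<bar>th - th'\<bar>" for u v
  proof -
    have "(e u v - th)\<^sup>2 - (e u v - th')\<^sup>2 = (th' - th) * (2 * e u v - th - th')"
      by (simp add: power2_eq_square algebra_simps)
    also have "\<dots> \<le> \<bar>th' - th\<bar> * \<bar>2 * e u v - th - th'\<bar>" by (metis abs_ge_self abs_mult)
    also have "\<dots> \<le> \<bar>th - th'\<bar> * (4 * T)"
      using eT[of u v] th by (intro mult_mono) auto
    finally show ?thesis by (simp add: algebra_simps)
  qed
  define G2 where "G2 u = (\<integral>\<^sup>+v. ennreal ((e u v - th')\<^sup>2) \<partial>gauss1 th')" for u
  have mG2: "G2 \<in> borel_measurable borel"
  proof -
    have "(\<lambda>(u, v). ennreal ((e u v - th')\<^sup>2)) \<in> borel_measurable (borel \<Otimes>\<^sub>M gauss1 th')"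
      using mF[of th'] by (simp add: case_prod_beta cong: measurable_cong_sets)
    then show ?thesis unfolding G2_def by (rule Gt'.borel_measurable_nn_integral)
  qed
  have G2H: "G2 u \<le> ennreal H" for u
  proof -
    have "G2 u \<le> (\<integral>\<^sup>+v. ennreal H \<partial>gauss1 th')"
      unfolding G2_def by (intro nn_integral_mono ennreal_leI sq_bound th)
    also have "\<dots> = ennreal H" by (simp add: Gt'.emeasure_space_1)
    finally show ?thesis .
  qed
  have "risk1 s th de e = (\<integral>\<^sup>+u. \<integral>\<^sup>+v. ennreal ((e u v - th)\<^sup>2) \<partial>gauss1 th \<partial>gauss1 m)"
    unfolding risk1_def m_def by (subst Gt.nn_integral_fst[symmetric]) (use mF in auto)
  also have "\<dots> \<le> (\<integral>\<^sup>+u. (\<integral>\<^sup>+v. ennreal ((e u v - th')\<^sup>2) \<partial>gauss1 th) + ennreal (4 * T * \<bar>th - th'\<bar>) \<partial>gauss1 m)"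
  proof (intro nn_integral_mono)
    fix u
    have "(\<integral>\<^sup>+v. ennreal ((e u v - th)\<^sup>2) \<partial>gauss1 th) \<le> (\<integral>\<^sup>+v. ennreal ((e u v - th')\<^sup>2) + ennreal (4 * T * \<bar>th - th'\<bar>) \<partial>gauss1 th)"
      by (intro nn_integral_mono) (simp add: ennreal_plus[symmetric] T step1 del: ennreal_plus)
    also have "\<dots> = (\<integral>\<^sup>+v. ennreal ((e u v - th')\<^sup>2) \<partial>gauss1 th) + ennreal (4 * T * \<bar>th - th'\<bar>)"
      using mv[of u] by (subst nn_integral_add) (auto simp: Gt.emeasure_space_1)
    finally show "(\<integral>\<^sup>+v. ennreal ((e u v - th)\<^sup>2) \<partial>gauss1 th) \<le> (\<integral>\<^sup>+v. ennreal ((e u v - th')\<^sup>2) \<partial>gauss1 th) + ennreal (4 * T * \<bar>th - th'\<bar>)" .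
  qed
  also have "\<dots> \<le> (\<integral>\<^sup>+u. G2 u + ennreal (2 * H * \<bar>th - th'\<bar>) + ennreal (4 * T * \<bar>th - th'\<bar>) \<partial>gauss1 m)"
  proof (intro nn_integral_mono add_right_mono)
    fix u
    show "(\<integral>\<^sup>+v. ennreal ((e u v - th')\<^sup>2) \<partial>gauss1 th) \<le> G2 u + ennreal (2 * H * \<bar>th - th'\<bar>)"
      unfolding G2_def
    proof (rule gauss1_shift[OF _ _ H d1])
      show "(\<lambda>v. ennreal ((e u v - th')\<^sup>2)) \<in> borel_measurable borel" using mv[of u] by measurable
      show "ennreal ((e u v - th')\<^sup>2) \<le> ennreal H" for v by (intro ennreal_leI sq_bound th(2))
    qed
  qed
  also have "\<dots> = (\<integral>\<^sup>+u. G2 u \<partial>gauss1 m) + ennreal (2 * H * \<bar>th - th'\<bar>) + ennreal (4 * T * \<bar>th - th'\<bar>)"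
    using mG2 by (simp add: nn_integral_add Gm.emeasure_space_1 add.assoc)
  also have "(\<integral>\<^sup>+u. G2 u \<partial>gauss1 m) \<le> (\<integral>\<^sup>+u. G2 u \<partial>gauss1 m') + ennreal (2 * H * \<bar>m - m'\<bar>)"
    by (rule gauss1_shift[OF mG2 G2H H]) (use d2 in \<open>simp add: m_def m'_def\<close>)
  also have "(\<integral>\<^sup>+u. G2 u \<partial>gauss1 m') = risk1 s th' de' e"
    unfolding risk1_def G2_def m'_def by (subst Gt'.nn_integral_fst[symmetric]) (use mF in auto)
  finally have "risk1 s th de e \<le> risk1 s th' de' e + ennreal (2 * H * \<bar>m - m'\<bar>) + ennreal (2 * H * \<bar>th - th'\<bar>) + ennreal (4 * T * \<bar>th - th'\<bar>)"
    by (simp add: add_right_mono)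
  also have "\<dots> = risk1 s th' de' e + ennreal (4*T*\<bar>th - th'\<bar> + 8*T\<^sup>2*\<bar>th - th'\<bar> + 8*T\<^sup>2*\<bar>(s*th+de) - (s*th'+de')\<bar>)"
    using T by (simp add: ennreal_plus[symmetric] H_def m_def m'_def add.assoc del: ennreal_plus)
  finally show ?thesis .
qed

definition clip :: "real \<Rightarrow> real \<Rightarrow> real" where "clip t x = max (-t) (min t x)"

lemma clip_abs: "\<bar>th\<bar> \<le> t \<Longrightarrow> \<bar>clip t x - th\<bar> \<le> \<bar>x - th\<bar>"
  unfolding clip_def by (smt (verit))

lemma clip_sq: "\<bar>th\<bar> \<le> t \<Longrightarrow> (clip t x - th)\<^sup>2 \<le> (x - th)\<^sup>2"
  using clip_abs[of th t x] by (metis abs_ge_zero power2_abs power_mono)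

lemma clip_bound: "t \<ge> 0 \<Longrightarrow> \<bar>clip t x\<bar> \<le> t"
  by (auto simp: clip_def max_def min_def)

lemma clip_meas:
  assumes "(\<lambda>z. e (fst z) (snd z)) \<in> borel_measurable (borel \<Otimes>\<^sub>M borel)"
  shows "(\<lambda>z. clip t (e (fst z) (snd z))) \<in> borel_measurable (borel \<Otimes>\<^sub>M borel)"
  using assms unfolding clip_def by measurable

lemma risk1_clip:
  assumes "(\<lambda>z. e (fst z) (snd z)) \<in> borel_measurable (borel \<Otimes>\<^sub>M borel)" and "\<bar>th\<bar> \<le> t"
  shows "risk1 s th de (\<lambda>u v. clip t (e u v)) \<le> risk1 s th de e"
  unfolding risk1_def by (intro nn_integral_mono ennreal_leI clip_sq assms(2))

lemma risk1_bounded: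
  assumes "\<And>u v. \<bar>e u v\<bar> \<le> T" "\<bar>th\<bar> \<le> T"
  shows "risk1 s th de e \<le> ennreal (4 * T\<^sup>2)"
proof -
  interpret prob_space "gauss1 (s * th + de) \<Otimes>\<^sub>M gauss1 th" by simp
  have "risk1 s th de e \<le> (\<integral>\<^sup>+z. ennreal (4 * T\<^sup>2) \<partial>(gauss1 (s * th + de) \<Otimes>\<^sub>M gauss1 th))"
    unfolding risk1_def
  proof (intro nn_integral_mono ennreal_leI)
    fix z :: "real \<times> real"
    have "\<bar>e (fst z) (snd z) - th\<bar> \<le> 2 * T" using assms(1)[of "fst z" "snd z"] assms(2) by linarith
    then have "\<bar>e (fst z) (snd z) - th\<bar>\<^sup>2 \<le> (2 * T)\<^sup>2" by (intro power_mono) auto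
    then show "(e (fst z) (snd z) - th)\<^sup>2 \<le> 4 * T\<^sup>2" by (simp add: power_mult_distrib)
  qed
  also have "\<dots> = ennreal (4 * T\<^sup>2)" by (simp add: emeasure_space_1)
  finally show ?thesis .
qed

lemma risk1_conv:
  assumes m1: "(\<lambda>z. e1 (fst z) (snd z)) \<in> borel_measurable (borel \<Otimes>\<^sub>M borel)"
    and m2: "(\<lambda>z. e2 (fst z) (snd z)) \<in> borel_measurable (borel \<Otimes>\<^sub>M borel)"
    and mu: "0 \<le> \<mu>" "\<mu> \<le> 1"
  shows "risk1 s th de (\<lambda>u v. \<mu> * e1 u v + (1 - \<mu>) * e2 u v) \<le> ennreal \<mu> * risk1 s th de e1 + ennreal (1 - \<mu>) * risk1 s th de e2"
proof -
  let ?M = "gauss1 (s * th + de) \<Otimes>\<^sub>M gauss1 th"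
  have pt: "(\<mu> * a + (1 - \<mu>) * b - th)\<^sup>2 \<le> \<mu> * (a - th)\<^sup>2 + (1 - \<mu>) * (b - th)\<^sup>2" for a b
  proof -
    have "\<mu> * (a - th)\<^sup>2 + (1 - \<mu>) * (b - th)\<^sup>2 - (\<mu> * a + (1 - \<mu>) * b - th)\<^sup>2 = \<mu> * (1 - \<mu>) * (a - b)\<^sup>2"
      by (simp add: power2_eq_square algebra_simps)
    moreover have "0 \<le> \<mu> * (1 - \<mu>) * (a - b)\<^sup>2" using mu by simp
    ultimately show ?thesis by linarith
  qed
  have "risk1 s th de (\<lambda>u v. \<mu> * e1 u v + (1 - \<mu>) * e2 u v) \<le> (\<integral>\<^sup>+z. ennreal \<mu> * ennreal ((e1 (fst z) (snd z) - th)\<^sup>2) + ennreal (1 - \<mu>) * ennreal ((e2 (fst z) (snd z) - th)\<^sup>2) \<partial>?M)"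
    unfolding risk1_def
    by (intro nn_integral_mono) (use mu pt in \<open>simp add: ennreal_mult[symmetric] ennreal_plus[symmetric] del: ennreal_plus\<close>)
  also have "\<dots> = ennreal \<mu> * risk1 s th de e1 + ennreal (1 - \<mu>) * risk1 s th de e2"
    unfolding risk1_def using m1 m2
    by (subst nn_integral_add; (subst nn_integral_cmult)?) (auto simp: nn_integral_cmult)
  finally show ?thesis .
qed

lemma RN1_le_worst:
  assumes "(\<lambda>z. e (fst z) (snd z)) \<in> borel_measurable (borel \<Otimes>\<^sub>M borel)"
  shows "RN1 tau zeta s \<le> worst_risk1 tau zeta s e"
  unfolding RN1_def by (rule INF_lower) (use assms in simp)

lemma RN1_finite:
  assumes "tau \<ge> 0"
  shows "RN1 tau zeta s \<le> ennreal (4 * tau\<^sup>2)"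
proof -
  have "RN1 tau zeta s \<le> worst_risk1 tau zeta s (\<lambda>u v. 0)" by (rule RN1_le_worst) simp
  also have "\<dots> \<le> ennreal (4 * tau\<^sup>2)" unfolding worst_risk1_def
    by (intro SUP_least risk1_bounded) (use assms in auto)
  finally show ?thesis .
qed

lemma ennreal_split_eps: "ennreal r \<le> ennreal (r - eps) + ennreal eps" if "(eps::real) > 0"
proof (cases "r \<ge> eps")
  case True then show ?thesis using that by (subst ennreal_plus[symmetric]) auto
next
  case False
  then have "ennreal r \<le> ennreal eps" by (intro ennreal_leI) simp
  also have "\<dots> \<le> ennreal (r - eps) + ennreal eps" by simp
  finally show ?thesis .
qed

lemma scalar_bayes:
  fixes tau zeta s eps :: real
  assumes tz: "tau \<ge> 0" "zeta \<ge> 0" and eps: "eps > 0"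
  shows "\<exists>\<pi> :: (real \<times> real) pmf. set_pmf \<pi> \<subseteq> {-tau..tau} \<times> {-zeta..zeta} \<and> finite (set_pmf \<pi>) \<and>
    (\<forall>e. (\<lambda>z. e (fst z) (snd z)) \<in> borel_measurable (borel \<Otimes>\<^sub>M borel) \<longrightarrow>
        RN1 tau zeta s \<le> (\<integral>\<^sup>+p. risk1 s (fst p) (snd p) e \<partial>\<pi>) + ennreal eps)"
proof -
  define K where "K = {-tau..tau} \<times> {-zeta..zeta}"
  define C where "C = 4*tau + 8*tau\<^sup>2 + 8*tau\<^sup>2*(\<bar>s\<bar>+1)"
  define h where "h = min (1/(\<bar>s\<bar>+1)) (eps/(C+1))"
  have C: "C \<ge> 0" using tz by (simp add: C_def)
  have h: "h > 0" using eps C by (simp add: h_def)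
  have h1: "(\<bar>s\<bar>+1) * h \<le> 1"
  proof -
    have "h \<le> 1/(\<bar>s\<bar>+1)" by (simp add: h_def)
    then show ?thesis by (simp add: field_simps)
  qed
  have h2: "C * h \<le> eps"
  proof -
    have "h \<le> eps/(C+1)" by (simp add: h_def)
    then have "C * h \<le> C * (eps/(C+1))" using C by (intro mult_left_mono) auto
    also have "\<dots> \<le> eps" using C eps by (simp add: field_simps)
    finally show ?thesis .
  qed
  have hle1: "h \<le> 1"
  proof -
    have "h \<le> (\<bar>s\<bar>+1) * h" using h by (simp add: algebra_simps)
    then show ?thesis using h1 by linarith
  qed
  have "compact K" unfolding K_def by (intro compact_Times compact_Icc)
  then have "seq_compact K" by (rule compact_imp_seq_compact)
  then obtain S where S: "finite S" "S \<subseteq> K" "K \<subseteq> (\<Union>x\<in>S. ball x h)"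
    using seq_compact_imp_totally_bounded h by metis
  have near: "\<exists>q\<in>S. \<bar>fst p - fst q\<bar> \<le> h \<and> \<bar>snd p - snd q\<bar> \<le> h" if p: "p \<in> K" for p
  proof -
    obtain q where q: "q \<in> S" "dist q p < h" using S(3) p by auto
    have "dist (fst p) (fst q) < h" "dist (snd p) (snd q) < h"
      using dist_fst_le[of p q] dist_snd_le[of p q] q(2) dist_commute[of p q] by linarith+
    then have "\<bar>fst p - fst q\<bar> \<le> h" "\<bar>snd p - snd q\<bar> \<le> h" by (simp_all add: dist_real_def)
    then show ?thesis using q(1) by blast
  qed
  have SK: "S \<noteq> {}" using S(3) tz by (auto simp: K_def)
  define E where "E = {e :: real \<Rightarrow> real \<Rightarrow> real. (\<lambda>z. e (fst z) (snd z)) \<in> borel_measurable (borel \<Otimes>\<^sub>M borel) \<and> (\<forall>u v. \<bar>e u v\<bar> \<le> tau)}"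
  have Kth: "\<bar>fst p\<bar> \<le> tau" if "p \<in> K" for p using that by (auto simp: K_def)
  have contS: "\<exists>q\<in>S. risk1 s (fst p) (snd p) e \<le> risk1 s (fst q) (snd q) e + ennreal eps" if e: "e \<in> E" and p: "p \<in> K" for e p
  proof -
    obtain q where q: "q \<in> S" "\<bar>fst p - fst q\<bar> \<le> h" "\<bar>snd p - snd q\<bar> \<le> h" using near[OF p] by blast
    have qK: "q \<in> K" using q S by auto
    have dm: "\<bar>(s * fst p + snd p) - (s * fst q + snd q)\<bar> \<le> (\<bar>s\<bar>+1) * h"
    proof -
      have "\<bar>(s * fst p + snd p) - (s * fst q + snd q)\<bar> \<le> \<bar>s\<bar> * \<bar>fst p - fst q\<bar> + \<bar>snd p - snd q\<bar>"
        by (metis abs_mult abs_triangle_ineq add_diff_add right_diff_distrib)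
      also have "\<dots> \<le> \<bar>s\<bar> * h + h" using q by (intro add_mono mult_left_mono) auto
      finally show ?thesis by (simp add: algebra_simps)
    qed
    have "risk1 s (fst p) (snd p) e \<le> risk1 s (fst q) (snd q) e + ennreal (4*tau*\<bar>fst p - fst q\<bar> + 8*tau\<^sup>2*\<bar>fst p - fst q\<bar> + 8*tau\<^sup>2*\<bar>(s*fst p+snd p) - (s*fst q+snd q)\<bar>)"
    proof (rule risk1_cont)
      show "(\<lambda>z. e (fst z) (snd z)) \<in> borel_measurable (borel \<Otimes>\<^sub>M borel)" using e by (simp add: E_def)
      show "\<bar>e u v\<bar> \<le> tau" for u v using e by (simp add: E_def)
      show "\<bar>fst p\<bar> \<le> tau" by (rule Kth[OF p])
      show "\<bar>fst q\<bar> \<le> tau" by (rule Kth[OF qK])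
      show "\<bar>fst p - fst q\<bar> \<le> 1" using q(2) hle1 by linarith
      show "\<bar>(s * fst p + snd p) - (s * fst q + snd q)\<bar> \<le> 1" using dm h1 by linarith
    qed
    also have "4*tau*\<bar>fst p - fst q\<bar> + 8*tau\<^sup>2*\<bar>fst p - fst q\<bar> + 8*tau\<^sup>2*\<bar>(s*fst p+snd p) - (s*fst q+snd q)\<bar> \<le> C * h"
    proof -
      have "4*tau*\<bar>fst p - fst q\<bar> \<le> 4*tau*h" using q tz by (intro mult_left_mono) auto
      moreover have "8*tau\<^sup>2*\<bar>fst p - fst q\<bar> \<le> 8*tau\<^sup>2*h" using q by (intro mult_left_mono) auto
      moreover have "8*tau\<^sup>2*\<bar>(s*fst p+snd p) - (s*fst q+snd q)\<bar> \<le> 8*tau\<^sup>2*((\<bar>s\<bar>+1) * h)" using dm by (intro mult_left_mono) auto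
      ultimately show ?thesis by (simp add: C_def algebra_simps)
    qed
    then have "ennreal (4*tau*\<bar>fst p - fst q\<bar> + 8*tau\<^sup>2*\<bar>fst p - fst q\<bar> + 8*tau\<^sup>2*\<bar>(s*fst p+snd p) - (s*fst q+snd q)\<bar>) \<le> ennreal eps"
      using h2 by (intro ennreal_leI) linarith
    finally show ?thesis using q(1) by (auto intro: add_left_mono)
  qed
  have RNfin: "RN1 tau zeta s \<le> ennreal (4 * tau\<^sup>2)" by (rule RN1_finite[OF tz(1)])
  define r0 where "r0 = enn2real (RN1 tau zeta s)"
  have r0: "RN1 tau zeta s = ennreal r0" "r0 \<ge> 0"
  proof -
    have "RN1 tau zeta s < top" using RNfin by (metis ennreal_less_top le_less_trans)
    then show "RN1 tau zeta s = ennreal r0" "r0 \<ge> 0" unfolding r0_def by (auto simp: enn2real_nonneg)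
  qed
  define rr where "rr q e = enn2real (risk1 s (fst q) (snd q) e)" for q e
  have rr_eq: "risk1 s (fst q) (snd q) e = ennreal (rr q e)" "rr q e \<ge> 0" if "e \<in> E" "q \<in> K" for e q
  proof -
    have "risk1 s (fst q) (snd q) e \<le> ennreal (4 * tau\<^sup>2)"
      by (rule risk1_bounded) (use that Kth in \<open>auto simp: E_def\<close>)
    then show "risk1 s (fst q) (snd q) e = ennreal (rr q e)" "rr q e \<ge> 0"
    proof -
      have "risk1 s (fst q) (snd q) e < top" using \<open>risk1 s (fst q) (snd q) e \<le> ennreal (4 * tau\<^sup>2)\<close> by (metis ennreal_less_top le_less_trans)
      then show "risk1 s (fst q) (snd q) e = ennreal (rr q e)" "rr q e \<ge> 0" unfolding rr_def by (auto simp: enn2real_nonneg)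
    qed
  qed
  define f where "f q e = rr q e - (r0 - eps)" for q e
  have nn: "\<exists>q\<in>S. 0 \<le> f q e" if e: "e \<in> E" for e
  proof (rule ccontr)
    assume "\<not> ?thesis"
    then have lt: "\<forall>q\<in>S. rr q e < r0 - eps" by (auto simp: f_def)
    define M where "M = Max ((\<lambda>q. rr q e) ` S)"
    have M: "M < r0 - eps" using lt SK S(1) by (simp add: M_def)
    have M0: "0 \<le> M"
    proof -
      obtain q where q: "q \<in> S" using SK by auto
      then have "0 \<le> rr q e" using rr_eq(2)[OF e, of q] S(2) by auto
      also have "rr q e \<le> M" unfolding M_def using q S(1) by auto
      finally show ?thesis .
    qed
    have "worst_risk1 tau zeta s e \<le> ennreal (M + eps)"
      unfolding worst_risk1_def
    proof (intro SUP_least)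
      fix th de assume "th \<in> {-tau..tau}" "de \<in> {-zeta..zeta}"
      then have pK: "(th, de) \<in> K" by (simp add: K_def)
      obtain q where q: "q \<in> S" "risk1 s th de e \<le> risk1 s (fst q) (snd q) e + ennreal eps"
        using contS[OF e pK] by auto
      have "rr q e \<le> M" unfolding M_def using q(1) S(1) by auto
      then have "risk1 s (fst q) (snd q) e + ennreal eps \<le> ennreal (M + eps)"
        using rr_eq[OF e, of q] q(1) S(2) eps by (auto simp: ennreal_plus[symmetric] simp del: ennreal_plus intro!: ennreal_leI)
      with q(2) show "risk1 s th de e \<le> ennreal (M + eps)" by simp
    qed
    also have "\<dots> < ennreal r0" using M M0 r0 eps
      by (intro ennreal_lessI) auto
    also have "ennreal r0 \<le> worst_risk1 tau zeta s e"
      using RN1_le_worst[of e tau zeta s] e r0 by (auto simp: E_def)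
    finally show False by simp
  qed
  have conv: "\<exists>e\<in>E. \<forall>q\<in>S. f q e \<le> \<mu> * f q e1 + (1 - \<mu>) * f q e2"
    if e12: "e1 \<in> E" "e2 \<in> E" and mu: "0 \<le> \<mu>" "\<mu> \<le> 1" for e1 e2 \<mu>
  proof -
    define e where "e u v = \<mu> * e1 u v + (1 - \<mu>) * e2 u v" for u v
    have eE: "e \<in> E"
    proof -
      have "(\<lambda>z. e (fst z) (snd z)) \<in> borel_measurable (borel \<Otimes>\<^sub>M borel)"
      proof -
        have m1: "(\<lambda>z. e1 (fst z) (snd z)) \<in> borel_measurable (borel \<Otimes>\<^sub>M borel)" using e12(1) by (simp add: E_def)
        have m2: "(\<lambda>z. e2 (fst z) (snd z)) \<in> borel_measurable (borel \<Otimes>\<^sub>M borel)" using e12(2) by (simp add: E_def)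
        show ?thesis unfolding e_def by (intro borel_measurable_add borel_measurable_times borel_measurable_const m1 m2)
      qed
      moreover have "\<bar>e u v\<bar> \<le> tau" for u v
      proof -
        have "\<bar>e u v\<bar> \<le> \<mu> * \<bar>e1 u v\<bar> + (1 - \<mu>) * \<bar>e2 u v\<bar>"
          unfolding e_def using mu by (metis abs_mult abs_of_nonneg abs_triangle_ineq diff_ge_0_iff_ge)
        also have "\<dots> \<le> \<mu> * tau + (1 - \<mu>) * tau"
          using e12 mu by (intro add_mono mult_left_mono) (auto simp: E_def)
        finally show ?thesis by (simp add: algebra_simps)
      qed
      ultimately show ?thesis by (simp add: E_def)
    qed
    have "f q e \<le> \<mu> * f q e1 + (1 - \<mu>) * f q e2" if q: "q \<in> S" for q
    proof -
      have qK: "q \<in> K" using q S by auto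
      have "ennreal (rr q e) \<le> ennreal \<mu> * ennreal (rr q e1) + ennreal (1 - \<mu>) * ennreal (rr q e2)"
        using risk1_conv[of e1 e2 \<mu> s "fst q" "snd q"] e12 mu rr_eq[OF eE qK] rr_eq[OF e12(1) qK] rr_eq[OF e12(2) qK]
        by (auto simp: E_def e_def[abs_def])
      also have "\<dots> = ennreal (\<mu> * rr q e1 + (1 - \<mu>) * rr q e2)"
        using mu rr_eq[OF e12(1) qK] rr_eq[OF e12(2) qK] by (simp add: ennreal_mult[symmetric] ennreal_plus[symmetric] del: ennreal_plus)
      finally have "rr q e \<le> \<mu> * rr q e1 + (1 - \<mu>) * rr q e2"
        using mu rr_eq[OF e12(1) qK] rr_eq[OF e12(2) qK] by (subst (asm) ennreal_le_iff) auto
      then show ?thesis by (simp add: f_def algebra_simps)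
    qed
    with eE show ?thesis by blast
  qed
  obtain w where w: "\<forall>q\<in>S. 0 \<le> w q" "sum w S = 1" "\<forall>e\<in>E. 0 \<le> (\<Sum>q\<in>S. w q * f q e)"
    using finite_minimax[of S E f, OF S(1) SK conv nn] by blast
  define wf where "wf q = (if q \<in> S then w q else 0)" for q
  have wf_nn: "0 \<le> wf q" for q using w(1) by (simp add: wf_def)
  have wf_int: "(\<integral>\<^sup>+q. ennreal (wf q) \<partial>count_space UNIV) = 1"
  proof -
    have "(\<integral>\<^sup>+q. ennreal (wf q) \<partial>count_space UNIV) = (\<integral>\<^sup>+q. ennreal (w q) * indicator S q \<partial>count_space UNIV)"
      by (intro nn_integral_cong) (simp add: wf_def)
    also have "\<dots> = (\<Sum>q\<in>S. ennreal (w q))"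
      using S(1) by (subst nn_integral_indicator_finite) auto
    also have "\<dots> = 1" using w(1,2) by simp
    finally show ?thesis .
  qed
  define \<pi> where "\<pi> = embed_pmf wf"
  have pmf\<pi>: "pmf \<pi> q = wf q" for q
    unfolding \<pi>_def by (rule pmf_embed_pmf[OF wf_nn wf_int])
  have set\<pi>: "set_pmf \<pi> \<subseteq> S"
    by (auto simp: set_pmf_eq pmf\<pi> wf_def)
  have bayes: "RN1 tau zeta s \<le> (\<integral>\<^sup>+p. risk1 s (fst p) (snd p) e \<partial>\<pi>) + ennreal eps"
    if me: "(\<lambda>z. e (fst z) (snd z)) \<in> borel_measurable (borel \<Otimes>\<^sub>M borel)" for e
  proof -
    define ec where "ec u v = clip tau (e u v)" for u v
    have ecE: "ec \<in> E" unfolding E_def ec_def using clip_meas[OF me] clip_bound[OF tz(1)] by auto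
    have "(\<integral>\<^sup>+p. risk1 s (fst p) (snd p) e \<partial>\<pi>) = (\<Sum>q\<in>S. risk1 s (fst q) (snd q) e * pmf \<pi> q)"
      by (rule nn_integral_measure_pmf_support) (use S(1) set\<pi> in auto)
    also have "\<dots> \<ge> (\<Sum>q\<in>S. ennreal (rr q ec) * ennreal (w q))"
    proof (intro sum_mono)
      fix q assume q: "q \<in> S"
      then have qK: "q \<in> K" using S by auto
      have "ennreal (rr q ec) \<le> risk1 s (fst q) (snd q) e"
        unfolding rr_eq(1)[OF ecE qK, symmetric] ec_def by (rule risk1_clip[OF me Kth[OF qK]])
      then show "ennreal (rr q ec) * ennreal (w q) \<le> risk1 s (fst q) (snd q) e * pmf \<pi> q"
        using q by (simp add: pmf\<pi> wf_def mult_right_mono)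
    qed
    finally have ge: "(\<Sum>q\<in>S. ennreal (rr q ec) * ennreal (w q)) \<le> (\<integral>\<^sup>+p. risk1 s (fst p) (snd p) e \<partial>\<pi>)" .
    have "(\<Sum>q\<in>S. ennreal (rr q ec) * ennreal (w q)) = ennreal (\<Sum>q\<in>S. w q * rr q ec)"
    proof -
      have "(\<Sum>q\<in>S. ennreal (rr q ec) * ennreal (w q)) = (\<Sum>q\<in>S. ennreal (w q * rr q ec))"
        using w(1) rr_eq(2)[OF ecE] S(2) by (intro sum.cong refl) (auto simp: ennreal_mult mult.commute)
      also have "\<dots> = ennreal (\<Sum>q\<in>S. w q * rr q ec)"
        using w(1) rr_eq(2)[OF ecE] S(2) by (intro sum_ennreal) auto
      finally show ?thesis .
    qed
    moreover have "r0 - eps \<le> (\<Sum>q\<in>S. w q * rr q ec)"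
    proof -
      have "0 \<le> (\<Sum>q\<in>S. w q * f q ec)" using w(3) ecE by blast
      also have "\<dots> = (\<Sum>q\<in>S. w q * rr q ec) - (r0 - eps) * sum w S"
        by (simp add: f_def right_diff_distrib sum_subtractf sum.distrib sum_distrib_left algebra_simps)
      finally show ?thesis using w(2) by simp
    qed
    ultimately have "ennreal (r0 - eps) \<le> (\<integral>\<^sup>+p. risk1 s (fst p) (snd p) e \<partial>\<pi>)"
      using ge by (metis ennreal_leI order_trans)
    then show ?thesis using ennreal_split_eps[OF eps, of r0] r0(1) by (metis add_right_mono order_trans)
  qed
  show ?thesis
    by (intro exI[of _ \<pi>] conjI allI impI bayes)
       (use set\<pi> S(1,2) in \<open>auto simp: K_def intro: finite_subset\<close>)
qed

definition thv :: "('d \<Rightarrow> real \<times> real) \<Rightarrow> real^'d::finite" where "thv P = (\<chi> j. fst (P j))"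
definition dev :: "('d \<Rightarrow> real \<times> real) \<Rightarrow> real^'d::finite" where "dev P = (\<chi> j. snd (P j))"
definition MM :: "real^'d^'d \<Rightarrow> 'd \<Rightarrow> real \<times> real \<Rightarrow> (real \<times> real) measure" where
  "MM D j p = gauss1 (D$j$j * fst p + snd p) \<Otimes>\<^sub>M gauss1 (fst p)"
definition ew :: "(real^'d \<Rightarrow> real^'d \<Rightarrow> real^'d) \<Rightarrow> 'd \<Rightarrow> ('d \<Rightarrow> real \<times> real) \<Rightarrow> real \<Rightarrow> real \<Rightarrow> real" where
  "ew est i w u v = est (fst (XY (w(i:=(u,v))))) (snd (XY (w(i:=(u,v))))) $ i"

lemma prob_space_MM[simp, intro]: "prob_space (MM D j p)"
  by (simp add: MM_def)

lemma sets_MM[measurable_cong]: "sets (MM D j p) = sets (borel \<Otimes>\<^sub>M borel)"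
  unfolding MM_def by (intro sets_pair_measure_cong) auto

lemma XY_measurable_gen:
  assumes "\<And>j. sets (N j) = sets (borel \<Otimes>\<^sub>M borel)"
  shows "XY \<in> measurable (PiM UNIV N) (borel \<Otimes>\<^sub>M borel)"
proof -
  have "XY \<in> measurable (QQ 0 0) (borel \<Otimes>\<^sub>M borel)" by (rule XY_measurable)
  moreover have "sets (QQ 0 0) = sets (PiM UNIV N)"
    unfolding QQ_def using assms by (intro sets_PiM_cong) auto
  ultimately show ?thesis by (subst measurable_cong_sets[of "PiM UNIV N" "QQ 0 0" "borel \<Otimes>\<^sub>M borel" "borel \<Otimes>\<^sub>M borel"]) auto
qed

lemma XY_upd_measurable:
  "(\<lambda>z. XY (w(i:=z))) \<in> measurable (borel \<Otimes>\<^sub>M borel) (borel \<Otimes>\<^sub>M borel)"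
proof -
  have c1: "(\<lambda>z::real\<times>real. fst ((w(i:=z)) j)) \<in> borel_measurable (borel \<Otimes>\<^sub>M borel)" for j
    by (cases "j = i") auto
  have c2: "(\<lambda>z::real\<times>real. snd ((w(i:=z)) j)) \<in> borel_measurable (borel \<Otimes>\<^sub>M borel)" for j
    by (cases "j = i") auto
  show ?thesis
    unfolding XY_def by (intro measurable_Pair borel_measurable_vec_lambda c1 c2)
qed

lemma ew_meas:
  assumes me: "(\<lambda>z. est (fst z) (snd z)) \<in> borel_measurable (borel \<Otimes>\<^sub>M borel)"
  shows "(\<lambda>z. ew est i w (fst z) (snd z)) \<in> borel_measurable (borel \<Otimes>\<^sub>M borel)"
proof -
  have "(\<lambda>z. est (fst (XY (w(i:=z)))) (snd (XY (w(i:=z))))) \<in> borel_measurable (borel \<Otimes>\<^sub>M borel)"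
    using measurable_compose[OF XY_upd_measurable me] by simp
  then have "(\<lambda>z. est (fst (XY (w(i:=z)))) (snd (XY (w(i:=z)))) $ i) \<in> borel_measurable (borel \<Otimes>\<^sub>M borel)"
    by (rule borel_measurable_vec_nth_fun)
  then show ?thesis by (simp add: ew_def)
qed

lemma thv_nth[simp]: "thv P $ j = fst (P j)" by (simp add: thv_def)
lemma dev_nth[simp]: "dev P $ j = snd (P j)" by (simp add: dev_def)

lemma coord_risk:
  fixes D :: "real^'d^'d"
  assumes D: "diag_mat D" and me: "(\<lambda>z. est (fst z) (snd z)) \<in> borel_measurable (borel \<Otimes>\<^sub>M borel)"
  shows "(\<integral>\<^sup>+\<omega>. ennreal ((est (fst (XY \<omega>)) (snd (XY \<omega>)) $ i - fst (P i))\<^sup>2) \<partial>QQ (D *v thv P + dev P) (thv P))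
    = (\<integral>\<^sup>+w. risk1 (D$i$i) (fst (P i)) (snd (P i)) (ew est i w) \<partial>PiM (UNIV - {i}) (\<lambda>j. MM D j (P j)))"
proof -
  let ?a = "D *v thv P + dev P"
  have mF: "(\<lambda>\<omega>. ennreal ((est (fst (XY \<omega>)) (snd (XY \<omega>)) $ i - fst (P i))\<^sup>2)) \<in> borel_measurable (QQ ?a (thv P))"
  proof -
    have "(\<lambda>\<omega>. est (fst (XY \<omega>)) (snd (XY \<omega>))) \<in> borel_measurable (QQ ?a (thv P))"
      using measurable_compose[OF XY_measurable me] by simp
    then have "(\<lambda>\<omega>. est (fst (XY \<omega>)) (snd (XY \<omega>)) $ i) \<in> borel_measurable (QQ ?a (thv P))"
      by (rule borel_measurable_vec_nth_fun)
    then show ?thesis by measurable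
  qed
  have aj: "?a $ j = D$j$j * fst (P j) + snd (P j)" for j by (simp add: diag_mult[OF D])
  have PM: "PiM (UNIV - {i}) (\<lambda>j. gauss1 (?a$j) \<Otimes>\<^sub>M gauss1 (thv P $ j)) = PiM (UNIV - {i}) (\<lambda>j. MM D j (P j))"
    by (intro PiM_cong refl) (simp add: MM_def diag_mult[OF D])
  show ?thesis
    unfolding coord_split[OF mF, of i] PM
  proof (intro nn_integral_cong)
    fix w
    show "(\<integral>\<^sup>+y. ennreal ((est (fst (XY (w(i:=y)))) (snd (XY (w(i:=y)))) $ i - fst (P i))\<^sup>2) \<partial>(gauss1 (?a$i) \<Otimes>\<^sub>M gauss1 (thv P $ i)))
       = risk1 (D$i$i) (fst (P i)) (snd (P i)) (ew est i w)"
      unfolding risk1_def ew_def by (simp add: diag_mult[OF D])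
  qed
qed

lemma risk1_ew_meas:
  assumes me: "(\<lambda>z. est (fst z) (snd z)) \<in> borel_measurable (borel \<Otimes>\<^sub>M borel)"
    and N: "\<And>j. sets (N j) = sets (borel \<Otimes>\<^sub>M borel)"
  shows "(\<lambda>w. risk1 s t d (ew est i w)) \<in> borel_measurable (PiM (UNIV - {i}) N)"
proof -
  define B where "B = (borel \<Otimes>\<^sub>M borel :: (real \<times> real) measure)"
  let ?M = "gauss1 (s * t + d) \<Otimes>\<^sub>M gauss1 t"
  interpret M: prob_space ?M by simp
  have U: "insert i (UNIV - {i}) = (UNIV::'a set)" by auto
  have upd0: "(\<lambda>(f, y). f(i := y)) \<in> measurable (PiM (UNIV - {i}) (\<lambda>_. B) \<Otimes>\<^sub>M B) (PiM UNIV (\<lambda>_. B))"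
    using measurable_add_dim[of i "UNIV - {i}" "\<lambda>_. B"] unfolding U .
  have sets_eq: "sets (PiM (UNIV - {i}) N \<Otimes>\<^sub>M ?M) = sets (PiM (UNIV - {i}) (\<lambda>_. B) \<Otimes>\<^sub>M B)"
    by (intro sets_pair_measure_cong sets_PiM_cong) (auto simp: N B_def)
  have upd: "(\<lambda>(f, y). f(i := y)) \<in> measurable (PiM (UNIV - {i}) N \<Otimes>\<^sub>M ?M) (PiM UNIV (\<lambda>_. B))"
    using upd0 by (subst measurable_cong_sets[OF sets_eq refl])
  have XYm: "XY \<in> measurable (PiM UNIV (\<lambda>_. B)) (borel \<Otimes>\<^sub>M borel)"
    by (rule XY_measurable_gen) (simp add: B_def)
  have "(\<lambda>x. est (fst (XY ((\<lambda>(f, y). f(i := y)) x))) (snd (XY ((\<lambda>(f, y). f(i := y)) x)))) \<in> borel_measurable (PiM (UNIV - {i}) N \<Otimes>\<^sub>M ?M)"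
    using measurable_compose[OF measurable_compose[OF upd XYm] me] by simp
  then have "(\<lambda>x. est (fst (XY ((\<lambda>(f, y). f(i := y)) x))) (snd (XY ((\<lambda>(f, y). f(i := y)) x))) $ i) \<in> borel_measurable (PiM (UNIV - {i}) N \<Otimes>\<^sub>M ?M)"
    by (rule borel_measurable_vec_nth_fun)
  then have G: "(\<lambda>x. ennreal ((est (fst (XY ((\<lambda>(f, y). f(i := y)) x))) (snd (XY ((\<lambda>(f, y). f(i := y)) x))) $ i - t)\<^sup>2)) \<in> borel_measurable (PiM (UNIV - {i}) N \<Otimes>\<^sub>M ?M)"
    by measurable
  have "(\<lambda>w. \<integral>\<^sup>+z. ennreal ((est (fst (XY (w(i := z)))) (snd (XY (w(i := z)))) $ i - t)\<^sup>2) \<partial>?M) \<in> borel_measurable (PiM (UNIV - {i}) N)"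
    by (rule M.borel_measurable_nn_integral) (use G in \<open>simp add: case_prod_beta'\<close>)
  then show ?thesis unfolding risk1_def ew_def by simp
qed

lemma RN_lower:
  fixes D :: "real^'d^'d" and tau zeta :: "real^'d"
  assumes D: "diag_mat D" and tz: "\<forall>i. tau$i \<ge> 0" "\<forall>i. zeta$i \<ge> 0"
    and me: "(\<lambda>z. est (fst z) (snd z)) \<in> borel_measurable (borel \<Otimes>\<^sub>M borel)"
  shows "(\<Sum>i\<in>UNIV. RN1 (tau$i) (zeta$i) (D$i$i)) \<le> worst_riskv tau zeta D est"
proof (rule ennreal_le_epsilon)
  fix eps :: real assume eps: "0 < eps"
  define n where "n = card (UNIV :: 'd set)"
  have n: "n > 0" by (simp add: n_def)
  define e' where "e' = eps / n"
  have e': "e' > 0" using eps n by (simp add: e'_def)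
  have "\<forall>i. \<exists>\<pi>::(real \<times> real) pmf. set_pmf \<pi> \<subseteq> {-tau$i..tau$i} \<times> {-zeta$i..zeta$i} \<and> finite (set_pmf \<pi>) \<and>
    (\<forall>e. (\<lambda>z. e (fst z) (snd z)) \<in> borel_measurable (borel \<Otimes>\<^sub>M borel) \<longrightarrow>
        RN1 (tau$i) (zeta$i) (D$i$i) \<le> (\<integral>\<^sup>+p. risk1 (D$i$i) (fst p) (snd p) e \<partial>\<pi>) + ennreal e')"
  proof
    fix i
    show "\<exists>\<pi>::(real \<times> real) pmf. set_pmf \<pi> \<subseteq> {-tau$i..tau$i} \<times> {-zeta$i..zeta$i} \<and> finite (set_pmf \<pi>) \<and>
    (\<forall>e. (\<lambda>z. e (fst z) (snd z)) \<in> borel_measurable (borel \<Otimes>\<^sub>M borel) \<longrightarrow>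
        RN1 (tau$i) (zeta$i) (D$i$i) \<le> (\<integral>\<^sup>+p. risk1 (D$i$i) (fst p) (snd p) e \<partial>\<pi>) + ennreal e')"
      by (rule scalar_bayes) (use tz e' in auto)
  qed
  from choice[OF this] obtain \<pi>f where \<pi>fa: "\<forall>i. set_pmf (\<pi>f i) \<subseteq> {-tau$i..tau$i} \<times> {-zeta$i..zeta$i} \<and> finite (set_pmf (\<pi>f i)) \<and>
    (\<forall>e. (\<lambda>z. e (fst z) (snd z)) \<in> borel_measurable (borel \<Otimes>\<^sub>M borel) \<longrightarrow>
        RN1 (tau$i) (zeta$i) (D$i$i) \<le> (\<integral>\<^sup>+p. risk1 (D$i$i) (fst p) (snd p) e \<partial>\<pi>f i) + ennreal e')"
    by blast
  have \<pi>f1: "\<And>i. set_pmf (\<pi>f i) \<subseteq> {-tau$i..tau$i} \<times> {-zeta$i..zeta$i}" using \<pi>fa by blast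
  have \<pi>f2: "\<And>i. finite (set_pmf (\<pi>f i))" using \<pi>fa by blast
  have \<pi>f3: "\<And>i e. (\<lambda>z. e (fst z) (snd z)) \<in> borel_measurable (borel \<Otimes>\<^sub>M borel) \<Longrightarrow>
        RN1 (tau$i) (zeta$i) (D$i$i) \<le> (\<integral>\<^sup>+p. risk1 (D$i$i) (fst p) (snd p) e \<partial>\<pi>f i) + ennreal e'"
    using \<pi>fa by blast
  define Pr where "Pr = Pi_pmf UNIV (0::real, 0::real) \<pi>f"
  define R where "R i P = (\<integral>\<^sup>+\<omega>. ennreal ((est (fst (XY \<omega>)) (snd (XY \<omega>)) $ i - fst (P i))\<^sup>2) \<partial>QQ (D *v thv P + dev P) (thv P))" for i P
  have risk_sum: "riskv D (thv P) (dev P) est = (\<Sum>i\<in>UNIV. R i P)" for P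
    unfolding R_def by (subst riskv_coords[OF me]) simp
  have supp: "thv P \<in> hrect tau \<and> dev P \<in> hrect zeta" if "P \<in> set_pmf Pr" for P
  proof -
    have "P j \<in> set_pmf (\<pi>f j)" for j
      using that unfolding Pr_def by (subst (asm) set_Pi_pmf) (auto simp: PiE_dflt_def)
    then have "P j \<in> {-tau$j..tau$j} \<times> {-zeta$j..zeta$j}" for j using \<pi>f1 by blast
    then have ab: "\<bar>fst (P j)\<bar> \<le> tau$j \<and> \<bar>snd (P j)\<bar> \<le> zeta$j" for j
      by (simp add: mem_Times_iff abs_le_iff) (meson minus_le_iff)
    have a: "\<bar>fst (P j)\<bar> \<le> tau$j" and b: "\<bar>snd (P j)\<bar> \<le> zeta$j" for j using ab by auto
    show ?thesis unfolding hrect_def using a b by simp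
  qed
  have upper: "(\<integral>\<^sup>+P. riskv D (thv P) (dev P) est \<partial>Pr) \<le> worst_riskv tau zeta D est"
  proof -
    have "(\<integral>\<^sup>+P. riskv D (thv P) (dev P) est \<partial>Pr) \<le> (\<integral>\<^sup>+P. worst_riskv tau zeta D est \<partial>Pr)"
    proof (rule nn_integral_mono_AE)
      show "AE P in measure_pmf Pr. riskv D (thv P) (dev P) est \<le> worst_riskv tau zeta D est"
        unfolding AE_measure_pmf_iff
      proof
        fix P assume "P \<in> set_pmf Pr"
        then have h1: "thv P \<in> hrect tau" and h2: "dev P \<in> hrect zeta" using supp by auto
        show "riskv D (thv P) (dev P) est \<le> worst_riskv tau zeta D est"
          unfolding worst_riskv_def by (rule SUP_upper2[OF h1]) (rule SUP_upper[OF h2])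
      qed
    qed
    also have "\<dots> = worst_riskv tau zeta D est" by (simp add: measure_pmf.emeasure_space_1)
    finally show ?thesis .
  qed
  have per_i: "RN1 (tau$i) (zeta$i) (D$i$i) \<le> (\<integral>\<^sup>+P. R i P \<partial>Pr) + ennreal e'" for i
  proof -
    let ?I = "UNIV - {i}"
    define Pr' where "Pr' = Pi_pmf ?I (0::real, 0::real) \<pi>f"
    have U: "insert i ?I = UNIV" by auto
    have Preq: "Pr = map_pmf (\<lambda>(y,f). f(i:=y)) (pair_pmf (\<pi>f i) Pr')"
      unfolding Pr_def Pr'_def using Pi_pmf_insert[of ?I i "(0::real, 0::real)" \<pi>f] by (simp add: U)
    have split: "(\<integral>\<^sup>+P. R i P \<partial>Pr) = (\<integral>\<^sup>+f. \<integral>\<^sup>+y. R i (f(i:=y)) \<partial>\<pi>f i \<partial>Pr')"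
      unfolding Preq by (subst pair_commute_pmf) (simp add: nn_integral_pair_pmf' case_prod_beta)
    have inner: "RN1 (tau$i) (zeta$i) (D$i$i) \<le> (\<integral>\<^sup>+y. R i (f(i:=y)) \<partial>\<pi>f i) + ennreal e'" for f
    proof -
      define Q where "Q = PiM ?I (\<lambda>j. MM D j (f j))"
      interpret Q: prob_space Q unfolding Q_def by (intro prob_space_PiM) simp
      define G where "G y w = risk1 (D$i$i) (fst y) (snd y) (ew est i w)" for y w
      let ?S = "set_pmf (\<pi>f i)"
      have Ri: "R i (f(i:=y)) = (\<integral>\<^sup>+w. G y w \<partial>Q)" for y
      proof -
        have "R i (f(i:=y)) = (\<integral>\<^sup>+w. risk1 (D$i$i) (fst ((f(i:=y)) i)) (snd ((f(i:=y)) i)) (ew est i w) \<partial>PiM ?I (\<lambda>j. MM D j ((f(i:=y)) j)))"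
          unfolding R_def by (rule coord_risk[OF D me])
        also have "PiM ?I (\<lambda>j. MM D j ((f(i:=y)) j)) = Q"
          unfolding Q_def by (intro PiM_cong) auto
        finally show ?thesis by (simp add: G_def del: fun_upd_apply add: fun_upd_same)
      qed
      have mG: "G y \<in> borel_measurable Q" for y
        unfolding G_def Q_def by (rule risk1_ew_meas[OF me]) (simp add: sets_MM)
      define X where "X w = (\<Sum>y\<in>?S. G y w * ennreal (pmf (\<pi>f i) y))" for w
      have mX: "X \<in> borel_measurable Q" unfolding X_def using mG by (intro borel_measurable_sum borel_measurable_times_ennreal borel_measurable_const) auto
      have X_int: "X w = (\<integral>\<^sup>+y. G y w \<partial>\<pi>f i)" for w
        unfolding X_def by (rule nn_integral_measure_pmf_finite[symmetric]) (use \<pi>f2 in auto)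
      have swap: "(\<integral>\<^sup>+w. X w \<partial>Q) = (\<integral>\<^sup>+y. R i (f(i:=y)) \<partial>\<pi>f i)"
      proof -
        have "(\<integral>\<^sup>+w. X w \<partial>Q) = (\<Sum>y\<in>?S. \<integral>\<^sup>+w. G y w * ennreal (pmf (\<pi>f i) y) \<partial>Q)"
          unfolding X_def by (rule nn_integral_sum) (use mG in auto)
        also have "\<dots> = (\<Sum>y\<in>?S. (\<integral>\<^sup>+w. G y w \<partial>Q) * ennreal (pmf (\<pi>f i) y))"
          by (intro sum.cong refl nn_integral_multc mG)
        also have "\<dots> = (\<integral>\<^sup>+y. (\<integral>\<^sup>+w. G y w \<partial>Q) \<partial>\<pi>f i)"
          by (rule nn_integral_measure_pmf_finite[symmetric]) (use \<pi>f2 in auto)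
        finally show ?thesis by (simp add: Ri)
      qed
      have bay: "RN1 (tau$i) (zeta$i) (D$i$i) \<le> X w + ennreal e'" for w
        unfolding X_int G_def by (rule \<pi>f3[OF ew_meas[OF me]])
      have "RN1 (tau$i) (zeta$i) (D$i$i) = (\<integral>\<^sup>+w. RN1 (tau$i) (zeta$i) (D$i$i) \<partial>Q)"
        by (simp add: Q.emeasure_space_1)
      also have "\<dots> \<le> (\<integral>\<^sup>+w. X w + ennreal e' \<partial>Q)" by (intro nn_integral_mono bay)
      also have "\<dots> = (\<integral>\<^sup>+w. X w \<partial>Q) + ennreal e'"
        using mX by (subst nn_integral_add) (auto simp: Q.emeasure_space_1)
      finally show ?thesis unfolding swap .
    qed
    have "RN1 (tau$i) (zeta$i) (D$i$i) = (\<integral>\<^sup>+f. RN1 (tau$i) (zeta$i) (D$i$i) \<partial>Pr')"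
      by (simp add: measure_pmf.emeasure_space_1)
    also have "\<dots> \<le> (\<integral>\<^sup>+f. (\<integral>\<^sup>+y. R i (f(i:=y)) \<partial>\<pi>f i) + ennreal e' \<partial>Pr')"
      by (intro nn_integral_mono inner)
    also have "\<dots> = (\<integral>\<^sup>+f. (\<integral>\<^sup>+y. R i (f(i:=y)) \<partial>\<pi>f i) \<partial>Pr') + ennreal e'"
      by (subst nn_integral_add) (auto simp: measure_pmf.emeasure_space_1)
    finally show ?thesis unfolding split .
  qed
  have "(\<Sum>i\<in>UNIV. RN1 (tau$i) (zeta$i) (D$i$i)) \<le> (\<Sum>i\<in>UNIV. (\<integral>\<^sup>+P. R i P \<partial>Pr) + ennreal e')"
    by (intro sum_mono per_i)
  also have "\<dots> = (\<Sum>i\<in>UNIV. \<integral>\<^sup>+P. R i P \<partial>Pr) + (\<Sum>i\<in>(UNIV::'d set). ennreal e')"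
    by (rule sum.distrib)
  also have "(\<Sum>i\<in>(UNIV::'d set). ennreal e') = ennreal eps"
  proof -
    have "(\<Sum>i\<in>(UNIV::'d set). ennreal e') = ennreal (\<Sum>i\<in>(UNIV::'d set). e')"
      by (rule sum_ennreal) (use e' in auto)
    also have "(\<Sum>i\<in>(UNIV::'d set). e') = eps" using n by (simp add: e'_def n_def)
    finally show ?thesis .
  qed
  also have "(\<Sum>i\<in>UNIV. \<integral>\<^sup>+P. R i P \<partial>Pr) = (\<integral>\<^sup>+P. riskv D (thv P) (dev P) est \<partial>Pr)"
    unfolding risk_sum by (rule nn_integral_sum[symmetric]) auto
  finally show "(\<Sum>i\<in>UNIV. RN1 (tau$i) (zeta$i) (D$i$i)) \<le> worst_riskv tau zeta D est + ennreal eps"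
    using upper by (meson add_right_mono order_trans)
qed

lemma sep_meas:
  fixes e :: "'d::finite \<Rightarrow> real \<Rightarrow> real \<Rightarrow> real"
  assumes me: "\<And>i. (\<lambda>z. e i (fst z) (snd z)) \<in> borel_measurable (borel \<Otimes>\<^sub>M borel)"
  shows "(\<lambda>z. (\<chi> i. e i (fst z $ i) (snd z $ i)) :: real^'d) \<in> borel_measurable (borel \<Otimes>\<^sub>M borel)"
proof (rule borel_measurable_vec_lambda)
  fix i
  have "(\<lambda>z::(real^'d) \<times> (real^'d). (fst z $ i, snd z $ i)) \<in> measurable (borel \<Otimes>\<^sub>M borel) (borel \<Otimes>\<^sub>M borel)"
    by measurable
  from measurable_compose[OF this me[of i]] show "(\<lambda>z. e i (fst z $ i) (snd z $ i)) \<in> borel_measurable (borel \<Otimes>\<^sub>M borel)" by simp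
qed

lemma worst_sep_le:
  fixes D :: "real^'d^'d" and e :: "'d \<Rightarrow> real \<Rightarrow> real \<Rightarrow> real"
  assumes D: "diag_mat D"
    and me: "\<And>i. (\<lambda>z. e i (fst z) (snd z)) \<in> borel_measurable (borel \<Otimes>\<^sub>M borel)"
  shows "worst_riskv tau zeta D (\<lambda>x y. \<chi> i. e i (x$i) (y$i)) \<le> (\<Sum>i\<in>UNIV. worst_risk1 (tau$i) (zeta$i) (D$i$i) (e i))"
  unfolding worst_riskv_def
proof (intro SUP_least)
  fix th de assume th: "th \<in> hrect tau" and de: "de \<in> hrect zeta"
  have "riskv D th de (\<lambda>x y. \<chi> i. e i (x$i) (y$i)) = (\<Sum>i\<in>UNIV. risk1 (D$i$i) (th$i) (de$i) (e i))"
    by (rule riskv_sep[OF D me])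
  also have "\<dots> \<le> (\<Sum>i\<in>UNIV. worst_risk1 (tau$i) (zeta$i) (D$i$i) (e i))"
  proof (intro sum_mono)
    fix i
    have h: "\<bar>th$i\<bar> \<le> tau$i" "\<bar>de$i\<bar> \<le> zeta$i" using th de by (auto simp: hrect_def)
    have h1: "th$i \<in> {-tau$i..tau$i}" and h2: "de$i \<in> {-zeta$i..zeta$i}" using h by (simp_all, arith+)
    show "risk1 (D$i$i) (th$i) (de$i) (e i) \<le> worst_risk1 (tau$i) (zeta$i) (D$i$i) (e i)"
      unfolding worst_risk1_def by (rule SUP_upper2[OF h1]) (rule SUP_upper[OF h2])
  qed
  finally show "riskv D th de (\<lambda>x y. \<chi> i. e i (x$i) (y$i)) \<le> (\<Sum>i\<in>UNIV. worst_risk1 (tau$i) (zeta$i) (D$i$i) (e i))" .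
qed

lemma sum_eps_split:
  fixes a :: "'d::finite \<Rightarrow> ennreal"
  assumes "eps > 0"
  shows "(\<Sum>i\<in>UNIV. a i + ennreal (eps / real CARD('d))) = (\<Sum>i\<in>UNIV. a i) + ennreal eps"
proof -
  have "(\<Sum>i\<in>(UNIV::'d set). ennreal (eps / real CARD('d))) = ennreal (\<Sum>i\<in>(UNIV::'d set). eps / real CARD('d))"
    by (rule sum_ennreal) (use assms in auto)
  also have "(\<Sum>i\<in>(UNIV::'d set). eps / real CARD('d)) = eps" by simp
  finally show ?thesis by (simp add: sum.distrib)
qed

lemma RN_vec_eq:
  fixes D :: "real^'d^'d" and tau zeta :: "real^'d"
  assumes D: "diag_mat D" and tz: "\<forall>i. tau$i \<ge> 0" "\<forall>i. zeta$i \<ge> 0"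
  shows "RN_vec tau zeta D = (\<Sum>i\<in>UNIV. RN1 (tau$i) (zeta$i) (D$i$i))"
proof (rule antisym)
  show "(\<Sum>i\<in>UNIV. RN1 (tau$i) (zeta$i) (D$i$i)) \<le> RN_vec tau zeta D"
    unfolding RN_vec_def by (intro INF_greatest RN_lower[OF D tz]) simp
next
  show "RN_vec tau zeta D \<le> (\<Sum>i\<in>UNIV. RN1 (tau$i) (zeta$i) (D$i$i))"
  proof (rule ennreal_le_epsilon)
    fix eps :: real assume eps: "0 < eps"
    define e' where "e' = eps / real CARD('d)"
    have e': "e' > 0" using eps by (simp add: e'_def)
    have "\<forall>i. \<exists>e. (\<lambda>z. e (fst z) (snd z)) \<in> borel_measurable (borel \<Otimes>\<^sub>M borel) \<and>
        worst_risk1 (tau$i) (zeta$i) (D$i$i) e < RN1 (tau$i) (zeta$i) (D$i$i) + ennreal e'"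
    proof
      fix i
      have fin: "RN1 (tau$i) (zeta$i) (D$i$i) < top"
        using RN1_finite[of "tau$i" "zeta$i" "D$i$i"] tz by (metis ennreal_less_top le_less_trans)
      then have "RN1 (tau$i) (zeta$i) (D$i$i) < RN1 (tau$i) (zeta$i) (D$i$i) + ennreal e'"
        using e' ennreal_add_left_cancel_less[of "RN1 (tau$i) (zeta$i) (D$i$i)" 0 "ennreal e'"] by simp
      then show "\<exists>e. (\<lambda>z. e (fst z) (snd z)) \<in> borel_measurable (borel \<Otimes>\<^sub>M borel) \<and>
        worst_risk1 (tau$i) (zeta$i) (D$i$i) e < RN1 (tau$i) (zeta$i) (D$i$i) + ennreal e'"
        unfolding RN1_def[of "tau$i"] by (subst (asm) INF_less_iff) auto
    qed
    from choice[OF this] obtain e where e: "\<forall>i. (\<lambda>z. e i (fst z) (snd z)) \<in> borel_measurable (borel \<Otimes>\<^sub>M borel) \<and>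
        worst_risk1 (tau$i) (zeta$i) (D$i$i) (e i) < RN1 (tau$i) (zeta$i) (D$i$i) + ennreal e'" by blast
    have me: "\<And>i. (\<lambda>z. e i (fst z) (snd z)) \<in> borel_measurable (borel \<Otimes>\<^sub>M borel)" using e by blast
    have "RN_vec tau zeta D \<le> worst_riskv tau zeta D (\<lambda>x y. \<chi> i. e i (x$i) (y$i))"
      unfolding RN_vec_def by (rule INF_lower) (simp add: sep_meas[OF me])
    also have "\<dots> \<le> (\<Sum>i\<in>UNIV. worst_risk1 (tau$i) (zeta$i) (D$i$i) (e i))"
      by (rule worst_sep_le[OF D me])
    also have "\<dots> \<le> (\<Sum>i\<in>UNIV. RN1 (tau$i) (zeta$i) (D$i$i) + ennreal e')"
      using e by (intro sum_mono less_imp_le) blast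
    also have "\<dots> = (\<Sum>i\<in>UNIV. RN1 (tau$i) (zeta$i) (D$i$i)) + ennreal eps"
      unfolding e'_def by (rule sum_eps_split[OF eps])
    finally show "RN_vec tau zeta D \<le> (\<Sum>i\<in>UNIV. RN1 (tau$i) (zeta$i) (D$i$i)) + ennreal eps" .
  qed
qed

definition dmat :: "('d::finite \<Rightarrow> real) \<Rightarrow> real^'d^'d" where
  "dmat a = (\<chi> i j. if i = j then a i else 0)"

lemma dmat_mult: "(dmat a *v x) $ i = a i * x $ i"
proof -
  have "(dmat a *v x) $ i = (\<Sum>j\<in>UNIV. (if i = j then a i else 0) * x $ j)"
    by (simp add: dmat_def matrix_vector_mult_def)
  also have "\<dots> = (\<Sum>j\<in>UNIV. (if j = i then a i * x $ i else 0))"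
    by (intro sum.cong) auto
  finally show ?thesis by simp
qed

lemma lin_sep: "(\<lambda>x y. dmat a *v x + dmat b *v y) = (\<lambda>x y. \<chi> i. (\<lambda>u v. a i * u + b i * v) (x$i) (y$i))"
  by (intro ext) (simp add: vec_eq_iff dmat_mult)

lemma RL1_le_lin: "RL1 tau zeta s \<le> worst_risk1 tau zeta s (\<lambda>u v. a * u + b * v)"
  unfolding RL1_def by (rule INF_lower2[of a]) (auto intro: INF_lower)

lemma RL1_finite:
  assumes "tau \<ge> 0" "zeta \<ge> 0"
  shows "RL1 tau zeta s < top"
proof -
  have "RL1 tau zeta s \<le> worst_risk1 tau zeta s (\<lambda>u v. 0 * u + 0 * v)" by (rule RL1_le_lin)
  also have "\<dots> \<le> ennreal (0\<^sup>2 + 0\<^sup>2 + (\<bar>0 * s + 0 - 1\<bar> * tau + \<bar>0\<bar> * zeta)\<^sup>2)"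
    by (rule wr1_lin_le[OF assms])
  also have "\<dots> < top" by simp
  finally show ?thesis .
qed

lemma RL_lower_AB:
  fixes A B D :: "real^'d^'d" and tau zeta :: "real^'d"
  assumes D: "diag_mat D" and tz: "\<forall>i. tau$i \<ge> 0" "\<forall>i. zeta$i \<ge> 0"
  shows "(\<Sum>i\<in>UNIV. RL1 (tau$i) (zeta$i) (D$i$i))
     \<le> ennreal ((\<Sum>i\<in>UNIV. (A$i$i)\<^sup>2 + (B$i$i)\<^sup>2) + (\<Sum>i\<in>UNIV. (\<bar>A$i$i * D$i$i + B$i$i - 1\<bar> * tau$i + \<bar>A$i$i\<bar> * zeta$i)\<^sup>2))"
proof -
  have "(\<Sum>i\<in>UNIV. RL1 (tau$i) (zeta$i) (D$i$i)) \<le> (\<Sum>i\<in>UNIV. ennreal ((A$i$i)\<^sup>2 + (B$i$i)\<^sup>2 + (\<bar>A$i$i * D$i$i + B$i$i - 1\<bar> * tau$i + \<bar>A$i$i\<bar> * zeta$i)\<^sup>2))"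
  proof (intro sum_mono)
    fix i
    show "RL1 (tau$i) (zeta$i) (D$i$i) \<le> ennreal ((A$i$i)\<^sup>2 + (B$i$i)\<^sup>2 + (\<bar>A$i$i * D$i$i + B$i$i - 1\<bar> * tau$i + \<bar>A$i$i\<bar> * zeta$i)\<^sup>2)"
      using order_trans[OF RL1_le_lin wr1_lin_le] tz by blast
  qed
  also have "\<dots> = ennreal ((\<Sum>i\<in>UNIV. (A$i$i)\<^sup>2 + (B$i$i)\<^sup>2) + (\<Sum>i\<in>UNIV. (\<bar>A$i$i * D$i$i + B$i$i - 1\<bar> * tau$i + \<bar>A$i$i\<bar> * zeta$i)\<^sup>2))"
    by (subst sum_ennreal) (auto simp: sum.distrib)
  finally show ?thesis .
qed

lemma offdiag_split:
  fixes T :: "'d::finite \<Rightarrow> 'd \<Rightarrow> real"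
  assumes nn: "\<And>i j. T i j \<ge> 0" and le: "(\<Sum>i\<in>UNIV. \<Sum>j\<in>UNIV. T i j) \<le> (\<Sum>i\<in>UNIV. T i i)"
  shows "i \<noteq> j \<Longrightarrow> T i j = 0"
proof -
  assume ij: "i \<noteq> j"
  have r: "(\<Sum>j\<in>UNIV. T k j) = T k k + (\<Sum>j\<in>UNIV - {k}. T k j)" for k
    by (rule sum.remove) auto
  have "(\<Sum>i\<in>UNIV. \<Sum>j\<in>UNIV. T i j) = (\<Sum>i\<in>UNIV. T i i + (\<Sum>j\<in>UNIV - {i}. T i j))"
    by (intro sum.cong refl r)
  also have "\<dots> = (\<Sum>i\<in>UNIV. T i i) + (\<Sum>i\<in>UNIV. \<Sum>j\<in>UNIV - {i}. T i j)" by (rule sum.distrib)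
  finally have "(\<Sum>i\<in>UNIV. \<Sum>j\<in>UNIV - {i}. T i j) \<le> 0" using le by simp
  moreover have "T i j \<le> (\<Sum>j\<in>UNIV - {i}. T i j)"
    using ij by (intro member_le_sum) (auto intro: nn)
  moreover have "(\<Sum>j\<in>UNIV - {i}. T i j) \<le> (\<Sum>i\<in>UNIV. \<Sum>j\<in>UNIV - {i}. T i j)"
    by (intro member_le_sum) (auto intro: sum_nonneg nn)
  ultimately show "T i j = 0" using nn[of i j] by linarith
qed

lemma RL_vec_eq_and_diag:
  fixes D :: "real^'d^'d" and tau zeta :: "real^'d"
  assumes D: "diag_mat D" and tz: "\<forall>i. tau$i \<ge> 0" "\<forall>i. zeta$i \<ge> 0"
  shows "RL_vec tau zeta D = (\<Sum>i\<in>UNIV. RL1 (tau$i) (zeta$i) (D$i$i))"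
    and "\<And>A B. minimax_linear tau zeta D A B \<Longrightarrow> diag_mat A \<and> diag_mat B"
proof -
  let ?S = "(\<Sum>i\<in>UNIV. RL1 (tau$i) (zeta$i) (D$i$i))"
  have low: "?S \<le> worst_riskv tau zeta D (\<lambda>x y. A *v x + B *v y)" for A B
  proof -
    let ?C = "(\<Sum>i\<in>UNIV. (\<bar>A$i$i * D$i$i + B$i$i - 1\<bar> * tau$i + \<bar>A$i$i\<bar> * zeta$i)\<^sup>2)"
    have A1: "?S \<le> ennreal ((\<Sum>i\<in>UNIV. (A$i$i)\<^sup>2 + (B$i$i)\<^sup>2) + ?C)" by (rule RL_lower_AB[OF D tz])
    have "(\<Sum>i\<in>UNIV. (A$i$i)\<^sup>2 + (B$i$i)\<^sup>2) \<le> (\<Sum>i\<in>UNIV. \<Sum>j\<in>UNIV. (A$i$j)\<^sup>2 + (B$i$j)\<^sup>2)"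
      by (intro sum_mono member_le_sum) auto
    then have A2: "ennreal ((\<Sum>i\<in>UNIV. (A$i$i)\<^sup>2 + (B$i$i)\<^sup>2) + ?C) \<le> ennreal ((\<Sum>i\<in>UNIV. \<Sum>j\<in>UNIV. (A$i$j)\<^sup>2 + (B$i$j)\<^sup>2) + ?C)"
      by (intro ennreal_leI) simp
    have A3: "ennreal ((\<Sum>i\<in>UNIV. \<Sum>j\<in>UNIV. (A$i$j)\<^sup>2 + (B$i$j)\<^sup>2) + ?C) \<le> worst_riskv tau zeta D (\<lambda>x y. A *v x + B *v y)"
      by (rule wrv_lin_lower[OF D tz])
    show ?thesis using A1 A2 A3 by (meson order_trans)
  qed
  show eq: "RL_vec tau zeta D = ?S"
  proof (rule antisym)
    show "?S \<le> RL_vec tau zeta D"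
      unfolding RL_vec_def by (intro INF_greatest low)
  next
    show "RL_vec tau zeta D \<le> ?S"
    proof (rule ennreal_le_epsilon)
      fix eps :: real assume eps: "0 < eps"
      define e' where "e' = eps / real CARD('d)"
      have e': "e' > 0" using eps by (simp add: e'_def)
      have "\<forall>i. \<exists>ab. worst_risk1 (tau$i) (zeta$i) (D$i$i) (\<lambda>u v. fst ab * u + snd ab * v) < RL1 (tau$i) (zeta$i) (D$i$i) + ennreal e'"
      proof
        fix i
        have fin: "RL1 (tau$i) (zeta$i) (D$i$i) < top" using RL1_finite tz by blast
        then have "RL1 (tau$i) (zeta$i) (D$i$i) < RL1 (tau$i) (zeta$i) (D$i$i) + ennreal e'"
          using e' ennreal_add_left_cancel_less[of "RL1 (tau$i) (zeta$i) (D$i$i)" 0 "ennreal e'"] by simp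
        then obtain a where "(INF b\<in>UNIV. worst_risk1 (tau$i) (zeta$i) (D$i$i) (\<lambda>u v. a * u + b * v)) < RL1 (tau$i) (zeta$i) (D$i$i) + ennreal e'"
          unfolding RL1_def[of "tau$i"] by (subst (asm) INF_less_iff) auto
        then obtain b where "worst_risk1 (tau$i) (zeta$i) (D$i$i) (\<lambda>u v. a * u + b * v) < RL1 (tau$i) (zeta$i) (D$i$i) + ennreal e'"
          by (subst (asm) INF_less_iff) auto
        then show "\<exists>ab. worst_risk1 (tau$i) (zeta$i) (D$i$i) (\<lambda>u v. fst ab * u + snd ab * v) < RL1 (tau$i) (zeta$i) (D$i$i) + ennreal e'"
          by (intro exI[of _ "(a, b)"]) simp
      qed
      from choice[OF this] obtain ab where ab: "\<And>i. worst_risk1 (tau$i) (zeta$i) (D$i$i) (\<lambda>u v. fst (ab i) * u + snd (ab i) * v) < RL1 (tau$i) (zeta$i) (D$i$i) + ennreal e'"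
        by blast
      define a where "a i = fst (ab i)" for i
      define b where "b i = snd (ab i)" for i
      have me: "(\<lambda>z. (\<lambda>u v. a i * u + b i * v) (fst z) (snd z)) \<in> borel_measurable (borel \<Otimes>\<^sub>M borel)" for i
        by simp
      have "RL_vec tau zeta D \<le> worst_riskv tau zeta D (\<lambda>x y. dmat a *v x + dmat b *v y)"
        unfolding RL_vec_def by (intro INF_lower2[of "dmat a"] INF_lower) auto
      also have "\<dots> \<le> (\<Sum>i\<in>UNIV. worst_risk1 (tau$i) (zeta$i) (D$i$i) (\<lambda>u v. a i * u + b i * v))"
        unfolding lin_sep by (rule worst_sep_le[OF D me])
      also have "\<dots> \<le> (\<Sum>i\<in>UNIV. RL1 (tau$i) (zeta$i) (D$i$i) + ennreal e')"
        using ab by (intro sum_mono less_imp_le) (simp add: a_def b_def)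
      also have "\<dots> = ?S + ennreal eps"
        unfolding e'_def by (rule sum_eps_split[OF eps])
      finally show "RL_vec tau zeta D \<le> ?S + ennreal eps" .
    qed
  qed
  fix A B :: "real^'d^'d"
  assume mm: "minimax_linear tau zeta D A B"
  let ?C = "(\<Sum>i\<in>UNIV. (\<bar>A$i$i * D$i$i + B$i$i - 1\<bar> * tau$i + \<bar>A$i$i\<bar> * zeta$i)\<^sup>2)"
  have "ennreal ((\<Sum>i\<in>UNIV. \<Sum>j\<in>UNIV. (A$i$j)\<^sup>2 + (B$i$j)\<^sup>2) + ?C) \<le> worst_riskv tau zeta D (\<lambda>x y. A *v x + B *v y)"
    by (rule wrv_lin_lower[OF D tz])
  also have "\<dots> = ?S" using mm eq by (simp add: minimax_linear_def)
  also have "\<dots> \<le> ennreal ((\<Sum>i\<in>UNIV. (A$i$i)\<^sup>2 + (B$i$i)\<^sup>2) + ?C)" by (rule RL_lower_AB[OF D tz])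
  finally have "(\<Sum>i\<in>UNIV. \<Sum>j\<in>UNIV. (A$i$j)\<^sup>2 + (B$i$j)\<^sup>2) + ?C \<le> (\<Sum>i\<in>UNIV. (A$i$i)\<^sup>2 + (B$i$i)\<^sup>2) + ?C"
    by (subst (asm) ennreal_le_iff) (auto intro!: add_nonneg_nonneg sum_nonneg)
  then have le: "(\<Sum>i\<in>UNIV. \<Sum>j\<in>UNIV. (A$i$j)\<^sup>2 + (B$i$j)\<^sup>2) \<le> (\<Sum>i\<in>UNIV. (A$i$i)\<^sup>2 + (B$i$i)\<^sup>2)" by simp
  have z: "(A$i$j)\<^sup>2 + (B$i$j)\<^sup>2 = 0" if "i \<noteq> j" for i j
    using offdiag_split[of "\<lambda>i j. (A$i$j)\<^sup>2 + (B$i$j)\<^sup>2", OF _ le that] by simp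
  show "diag_mat A \<and> diag_mat B"
    unfolding diag_mat_def using z by (auto simp: add_nonneg_eq_0_iff)
qed

theorem proposition6:
  fixes D :: "real ^ 'd ^ 'd" and tau zeta :: "real ^ 'd"
  assumes "diag_mat D"
    and "\<forall>i. tau $ i \<ge> 0" and "\<forall>i. zeta $ i \<ge> 0"
  shows "RL_vec tau zeta D = (\<Sum>i\<in>UNIV. RL1 (tau $ i) (zeta $ i) (D $ i $ i))
         \<and> (\<forall>A B. minimax_linear tau zeta D A B \<longrightarrow> diag_mat A \<and> diag_mat B)
         \<and> RN_vec tau zeta D = (\<Sum>i\<in>UNIV. RN1 (tau $ i) (zeta $ i) (D $ i $ i))"
  using RL_vec_eq_and_diag[OF assms] RN_vec_eq[OF assms] by blast

end
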